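(* Let $\xi(t)=(\xi_1(t),\dots,\xi_d(t))$, $t\geq 0$, be a continuous in $t$ stationary $d$-dimensional stochastic process on a probability space $(\Omega,\mathcal{F},P)$ such that $E|\xi(0)|<\infty$. Let $Q=(Q_1,\dots,Q_d)$ be the (in general random) almost sure limit $Q=\lim_{t\to\infty}t^{-1}\int_0^t\xi(s)ds$, which exists by the Birkhoff ergodic theorem. For $\nu\geq1$ and $1\leq i_1,\dots,i_\nu\leq d$ define \[ \Sigma^{i_1,\dots,i_\nu}(t)=\int_{0\leq s_1\leq\dots\leq s_\nu\leq t}\xi_{i_1}(s_1)\cdots\xi_{i_\nu}(s_\nu)\,ds_1\cdots ds_\nu . \] Then with probability one, \[ \lim_{t\to\infty}t^{-\nu}\Sigma^{i_1,\dots,i_\nu}(t)=\frac 1{\nu !}\prod_{j=1}^\nu Q_{i_j} \] for all $1\leq i_1,\dots,i_\nu\leq d$.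
   Context: $|\cdot|$ denotes the Euclidean norm on $\mathbb{R}^d$. *)

theory Defs
  imports "HOL-Probability.Probability"
begin

text \<open>Strict stationarity of a process indexed by t \<ge> 0: for every shift h \<ge> 0 the
law of the shifted path (t \<mapsto> xi (t+h)) on the product sigma-algebra over [0,\<infinity>)
(i.e. all finite-dimensional distributions) coincides with the law of the path.\<close>
definition stationary_process ::
  "'w measure \<Rightarrow> (real \<Rightarrow> 'w \<Rightarrow> 'b::topological_space) \<Rightarrow> bool" where
  "stationary_process M xi \<longleftrightarrow>
     (\<forall>h\<ge>0. distr M (Pi\<^sub>M {0..} (\<lambda>_. borel)) (\<lambda>w. \<lambda>t\<in>{0..}. xi (t + h) w)
           = distr M (Pi\<^sub>M {0..} (\<lambda>_. borel)) (\<lambda>w. \<lambda>t\<in>{0..}. xi t w))"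

text \<open>Iterated integrals, indices given in reverse order (outermost index first).\<close>
fun iter_int_rev :: "(real \<Rightarrow> real ^ 'n) \<Rightarrow> 'n list \<Rightarrow> real \<Rightarrow> real" where
  "iter_int_rev x [] t = 1"
| "iter_int_rev x (i # rs) t = integral {0..t} (\<lambda>s. iter_int_rev x rs s * (x s $ i))"

text \<open>Sigma^{i_1..i_nu}(t) = integral over 0 \<le> s_1 \<le> ... \<le> s_nu \<le> t of
  x_{i_1}(s_1) ... x_{i_nu}(s_nu), written as the iterated integral.\<close>
definition Sigma :: "(real \<Rightarrow> real ^ 'n) \<Rightarrow> 'n list \<Rightarrow> real \<Rightarrow> real" where
  "Sigma x is t = iter_int_rev x (rev is) t"

end

theory Submission
  imports Defs
begin

definition seqM :: "(nat \<Rightarrow> real) measure" where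
  "seqM = Pi\<^sub>M UNIV (\<lambda>_. borel)"

definition shf :: "(nat \<Rightarrow> real) \<Rightarrow> (nat \<Rightarrow> real)" where
  "shf y = (\<lambda>n. y (Suc n))"

lemma space_seqM[simp]: "space seqM = UNIV"
  by (simp add: seqM_def space_PiM)

lemma seqM_coord_meas[measurable]: "(\<lambda>y. y k) \<in> borel_measurable seqM"
  unfolding seqM_def by measurable

lemma shf_meas[measurable]: "shf \<in> seqM \<rightarrow>\<^sub>M seqM"
  unfolding shf_def seqM_def
  by (rule measurable_PiM_single') (auto simp: space_PiM)

locale stat_seq = prob_space nu for nu :: "(nat \<Rightarrow> real) measure" +
  assumes sets_nu[measurable_cong]: "sets nu = sets seqM"
  and inv: "distr nu seqM shf = nu"
  and int0: "integrable nu (\<lambda>y. y 0)"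
begin

lemma space_nu[simp]: "space nu = UNIV"
  using sets_eq_imp_space_eq[OF sets_nu] by simp

lemma meas_nu_iff: "f \<in> nu \<rightarrow>\<^sub>M N \<longleftrightarrow> f \<in> seqM \<rightarrow>\<^sub>M N"
  by (simp add: measurable_cong_sets[OF sets_nu refl])

lemma shf_meas_nu[measurable]: "shf \<in> nu \<rightarrow>\<^sub>M seqM"
  using meas_nu_iff by simp

lemma integral_shf:
  fixes g :: "(nat \<Rightarrow> real) \<Rightarrow> real"
  assumes [measurable]: "g \<in> borel_measurable seqM"
  shows "integral\<^sup>L nu (\<lambda>y. g (shf y)) = integral\<^sup>L nu g"
proof -
  have "integral\<^sup>L nu g = integral\<^sup>L (distr nu seqM shf) g" using inv by simp
  also have "\<dots> = integral\<^sup>L nu (\<lambda>y. g (shf y))"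
    using integral_distr[of shf nu seqM g] by simp
  finally show ?thesis by simp
qed

lemma integrable_shf:
  fixes g :: "(nat \<Rightarrow> real) \<Rightarrow> real"
  assumes [measurable]: "g \<in> borel_measurable seqM" and "integrable nu g"
  shows "integrable nu (\<lambda>y. g (shf y))"
proof -
  have "integrable (distr nu seqM shf) g" using inv assms by simp
  then show ?thesis using integrable_distr_eq[of shf nu seqM g] by simp
qed

lemma integrable_coord: "integrable nu (\<lambda>y. y k)"
proof (induction k)
  case 0 then show ?case by (rule int0)
next
  case (Suc k)
  have "integrable nu (\<lambda>y. (\<lambda>z. z k) (shf y))"
    by (rule integrable_shf) (use Suc in auto)
  then show ?case by (simp add: shf_def)
qed

end

definition SF :: "(nat \<Rightarrow> real) set \<Rightarrow> real \<Rightarrow> real \<Rightarrow> nat \<Rightarrow> (nat \<Rightarrow> real) \<Rightarrow> real" where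
  "SF B a b n y = indicator B y * (\<Sum>k<n. a * y k + b)"

fun MX :: "(nat \<Rightarrow> real) set \<Rightarrow> real \<Rightarrow> real \<Rightarrow> nat \<Rightarrow> (nat \<Rightarrow> real) \<Rightarrow> real" where
  "MX B a b 0 y = 0"
| "MX B a b (Suc n) y = max (MX B a b n y) (SF B a b (Suc n) y)"

lemma SF_0[simp]: "SF B a b 0 y = 0" by (simp add: SF_def)

lemma SF_Suc:
  assumes "\<And>y. shf y \<in> B \<longleftrightarrow> y \<in> B"
  shows "SF B a b (Suc k) y = indicator B y * (a * y 0 + b) + SF B a b k (shf y)"
proof -
  have "indicator B (shf y) = (indicator B y :: real)" using assms by (simp add: indicator_def)
  moreover have "(\<Sum>j<Suc k. a * y j + b) = (a * y 0 + b) + (\<Sum>j<k. a * y (Suc j) + b)"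
    by (rule sum.lessThan_Suc_shift)
  ultimately show ?thesis unfolding SF_def by (simp add: shf_def algebra_simps del: sum.lessThan_Suc)
qed

lemma MX_ge: "k \<le> n \<Longrightarrow> SF B a b k y \<le> MX B a b n y"
proof (induction n)
  case 0 then show ?case by simp
next
  case (Suc n) then show ?case by (cases "k = Suc n") auto
qed

lemma MX_nonneg: "0 \<le> MX B a b n y"
  using MX_ge[of 0 n B a b y] by simp

lemma MX_mono: "MX B a b n y \<le> MX B a b (Suc n) y" by simp

lemma MX_pos: "0 < MX B a b n y \<Longrightarrow> \<exists>k. 1 \<le> k \<and> k \<le> n \<and> MX B a b n y = SF B a b k y"
proof (induction n)
  case 0 then show ?case by simp
next
  case (Suc n)
  show ?case
  proof (cases "SF B a b (Suc n) y \<le> MX B a b n y")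
    case True
    then have "MX B a b (Suc n) y = MX B a b n y" by simp
    with Suc show ?thesis by (metis le_SucI)
  next
    case False then show ?thesis by auto
  qed
qed

lemma SF_bound: "k \<le> n \<Longrightarrow> \<bar>SF B a b k y\<bar> \<le> (\<Sum>j<n. \<bar>a\<bar> * \<bar>y j\<bar> + \<bar>b\<bar>)"
proof -
  assume "k \<le> n"
  have "\<bar>SF B a b k y\<bar> \<le> \<bar>\<Sum>j<k. a * y j + b\<bar>"
    unfolding SF_def by (simp add: indicator_def abs_mult)
  also have "\<dots> \<le> (\<Sum>j<k. \<bar>a * y j + b\<bar>)" by (rule sum_abs)
  also have "\<dots> \<le> (\<Sum>j<k. \<bar>a\<bar> * \<bar>y j\<bar> + \<bar>b\<bar>)"
    by (rule sum_mono) (metis abs_mult abs_triangle_ineq)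
  also have "\<dots> \<le> (\<Sum>j<n. \<bar>a\<bar> * \<bar>y j\<bar> + \<bar>b\<bar>)"
    by (rule sum_mono2) (use \<open>k \<le> n\<close> in auto)
  finally show ?thesis .
qed

lemma MX_bound: "\<bar>MX B a b n y\<bar> \<le> (\<Sum>j<n. \<bar>a\<bar> * \<bar>y j\<bar> + \<bar>b\<bar>)"
proof (cases "0 < MX B a b n y")
  case True
  then obtain k where "k \<le> n" "MX B a b n y = SF B a b k y" using MX_pos by blast
  then show ?thesis using SF_bound by metis
next
  case False
  then have "MX B a b n y = 0" using MX_nonneg[of B a b n y] by linarith
  then show ?thesis by (simp add: sum_nonneg)
qed

lemma MX_key:
  assumes "\<And>y. shf y \<in> B \<longleftrightarrow> y \<in> B"
  shows "MX B a b n y - MX B a b n (shf y)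
     \<le> indicator {y. 0 < MX B a b n y} y * (indicator B y * (a * y 0 + b))"
proof (cases "0 < MX B a b n y")
  case True
  then obtain k where k: "1 \<le> k" "k \<le> n" "MX B a b n y = SF B a b k y" using MX_pos by blast
  then obtain j where j: "k = Suc j" by (cases k) auto
  have "SF B a b j (shf y) \<le> MX B a b n (shf y)" using k j by (intro MX_ge) auto
  then show ?thesis using True k j SF_Suc[OF assms, of a b j y] by simp
next
  case False
  then show ?thesis using MX_nonneg[of B a b n y] MX_nonneg[of B a b n "shf y"] by simp
qed

lemma SF_meas[measurable]: assumes [measurable]: "B \<in> sets seqM" shows "SF B a b k \<in> borel_measurable seqM"
  unfolding SF_def by measurable

lemma MX_meas[measurable]: assumes [measurable]: "B \<in> sets seqM" shows "MX B a b n \<in> borel_measurable seqM"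
proof (induction n)
  case 0 then show ?case by simp
next
  case (Suc n)
  note [measurable] = Suc
  show ?case by simp measurable
qed

context stat_seq begin

lemma integrable_MX: "B \<in> sets seqM \<Longrightarrow> integrable nu (MX B a b n)"
proof -
  assume [measurable]: "B \<in> sets seqM"
  have "integrable nu (\<lambda>y. \<Sum>j<n. \<bar>a\<bar> * \<bar>y j\<bar> + \<bar>b\<bar>)"
    using integrable_coord by auto
  then show ?thesis
    by (rule Bochner_Integration.integrable_bound) (auto simp: meas_nu_iff intro!: order.trans[OF MX_bound])
qed

lemma maximal_n:
  assumes [measurable]: "B \<in> sets seqM" and inv: "\<And>y. shf y \<in> B \<longleftrightarrow> y \<in> B"
  shows "0 \<le> (\<integral>y. indicator {y. 0 < MX B a b n y} y * (indicator B y * (a * y 0 + b)) \<partial>nu)"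
proof -
  have i1: "integrable nu (MX B a b n)" by (rule integrable_MX) simp
  have i2: "integrable nu (\<lambda>y. MX B a b n (shf y))" by (rule integrable_shf) (auto intro: i1)
  have i3: "integrable nu (\<lambda>y. indicator {y. 0 < MX B a b n y} y * (indicator B y * (a * y 0 + b)))"
  proof -
    have "integrable nu (\<lambda>y. \<bar>a\<bar> * \<bar>y 0\<bar> + \<bar>b\<bar>)" using int0 by auto
    then show ?thesis
      by (rule Bochner_Integration.integrable_bound)
         (auto simp: meas_nu_iff indicator_def abs_mult intro!: order.trans[OF abs_triangle_ineq])
  qed
  have "0 = (\<integral>y. MX B a b n y \<partial>nu) - (\<integral>y. MX B a b n (shf y) \<partial>nu)"
    by (simp add: integral_shf)
  also have "\<dots> = (\<integral>y. MX B a b n y - MX B a b n (shf y) \<partial>nu)"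
    using i1 i2 by simp
  also have "\<dots> \<le> (\<integral>y. indicator {y. 0 < MX B a b n y} y * (indicator B y * (a * y 0 + b)) \<partial>nu)"
    by (rule integral_mono) (use i1 i2 i3 MX_key[OF inv] in auto)
  finally show ?thesis .
qed


lemma maximal:
  assumes [measurable]: "B \<in> sets seqM" and inv: "\<And>y. shf y \<in> B \<longleftrightarrow> y \<in> B"
    and pos: "\<And>y. y \<in> B \<Longrightarrow> \<exists>n. 0 < (\<Sum>k<n. a * y k + b)"
  shows "0 \<le> (\<integral>y. indicator B y * (a * y 0 + b) \<partial>nu)"
proof -
  let ?s = "\<lambda>n y. indicator {y. 0 < MX B a b n y} y * (indicator B y * (a * y 0 + b)) :: real"
  let ?f = "\<lambda>y. indicator B y * (a * y 0 + b) :: real"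
  have lim: "(\<lambda>n. ?s n y) \<longlonglongrightarrow> ?f y" for y
  proof (cases "y \<in> B")
    case True
    then obtain n0 where n0: "0 < (\<Sum>k<n0. a * y k + b)" using pos by blast
    have "eventually (\<lambda>n. ?s n y = ?f y) sequentially"
    proof (rule eventually_sequentiallyI[of n0])
      fix n assume "n0 \<le> n"
      then have "SF B a b n0 y \<le> MX B a b n y" by (rule MX_ge)
      moreover have "SF B a b n0 y > 0" using n0 True by (simp add: SF_def)
      ultimately show "?s n y = ?f y" by simp
    qed
    then show ?thesis by (rule tendsto_eventually)
  next
    case False then show ?thesis by simp
  qed
  have "(\<lambda>n. \<integral>y. ?s n y \<partial>nu) \<longlonglongrightarrow> (\<integral>y. ?f y \<partial>nu)"
  proof (rule integral_dominated_convergence[where w = "\<lambda>y. \<bar>a\<bar> * \<bar>y 0\<bar> + \<bar>b\<bar>"])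
    show "?f \<in> borel_measurable nu" by (simp add: meas_nu_iff)
    show "?s n \<in> borel_measurable nu" for n by (simp add: meas_nu_iff)
    show "integrable nu (\<lambda>y. \<bar>a\<bar> * \<bar>y 0\<bar> + \<bar>b\<bar>)" using int0 by auto
    show "AE y in nu. (\<lambda>n. ?s n y) \<longlonglongrightarrow> ?f y" using lim by simp
    show "AE y in nu. norm (?s n y) \<le> \<bar>a\<bar> * \<bar>y 0\<bar> + \<bar>b\<bar>" for n
      by (auto simp: indicator_def abs_mult intro!: order.trans[OF abs_triangle_ineq])
  qed
  then show ?thesis
    by (rule tendsto_lowerbound) (use maximal_n[OF assms(1) inv] in auto)
qed

end

definition hiS :: "real \<Rightarrow> (nat \<Rightarrow> real) set" where
  "hiS b = {y. \<exists>c::rat. b < of_rat c \<and> (\<forall>m. \<exists>n>m. of_rat c * real n < (\<Sum>k<n. y k))}"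

definition loS :: "real \<Rightarrow> (nat \<Rightarrow> real) set" where
  "loS a = {y. \<exists>c::rat. of_rat c < a \<and> (\<forall>m. \<exists>n>m. (\<Sum>k<n. y k) < of_rat c * real n)}"

lemma hiS_meas[measurable]: "hiS b \<in> sets seqM"
proof -
  have "Measurable.pred seqM (\<lambda>y. \<exists>c::rat. b < of_rat c \<and> (\<forall>m. \<exists>n>m. of_rat c * real n < (\<Sum>k<n. y k)))"
    by measurable
  then show ?thesis by (simp add: pred_def hiS_def)
qed

lemma loS_meas[measurable]: "loS b \<in> sets seqM"
proof -
  have "Measurable.pred seqM (\<lambda>y. \<exists>c::rat. of_rat c < b \<and> (\<forall>m. \<exists>n>m. (\<Sum>k<n. y k) < of_rat c * real n))"
    by measurable
  then show ?thesis by (simp add: pred_def loS_def)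
qed

lemma psum_shf: "(\<Sum>k<Suc n. y k) = y 0 + (\<Sum>k<n. shf y k)"
  unfolding shf_def by (rule sum.lessThan_Suc_shift)

lemma big_nat: "\<exists>N::nat. \<forall>n\<ge>N. x \<le> d * real n" if "d > 0" for x d :: real
proof -
  obtain N :: nat where "x / d < real N" using reals_Archimedean2 by blast
  then have "x \<le> d * real N" using that by (simp add: field_simps)
  then show ?thesis using that
    by (intro exI[of _ N]) (auto intro: order.trans[OF _ mult_left_mono])
qed

lemma hiS_inv:
  assumes "b \<in> \<rat>"
  shows "shf y \<in> hiS b \<longleftrightarrow> y \<in> hiS b"
proof -
  obtain r where r: "b = of_rat r" using assms Rats_cases by blast
  show ?thesis
  proof
    assume "shf y \<in> hiS b"
    then obtain c where c: "b < of_rat c" "\<And>m. \<exists>n>m. of_rat c * real n < (\<Sum>k<n. shf y k)"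
      unfolding hiS_def by auto
    define c' where "c' = (c + r) / 2"
    have c'1: "b < of_rat c'" "of_rat c' < (of_rat c :: real)"
      using c(1) unfolding c'_def r by (simp_all add: of_rat_add of_rat_divide)
    obtain N where N: "\<And>n. n \<ge> N \<Longrightarrow> of_rat c' - y 0 \<le> (of_rat c - of_rat c') * real n"
      using big_nat[of "of_rat c - of_rat c'" "of_rat c' - y 0"] c'1 by auto
    have "\<exists>n>m. of_rat c' * real n < (\<Sum>k<n. y k)" for m
    proof -
      obtain n where n: "n > m + N" "of_rat c * real n < (\<Sum>k<n. shf y k)" using c(2) by blast
      have "of_rat c' * real (Suc n) \<le> y 0 + of_rat c * real n"
        using N[of n] n(1) by (simp add: algebra_simps)
      also have "\<dots> < (\<Sum>k<Suc n. y k)" using n(2) psum_shf[of y n] by simp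
      finally show ?thesis using n(1) by (intro exI[of _ "Suc n"]) auto
    qed
    then show "y \<in> hiS b" unfolding hiS_def using c'1 by auto
  next
    assume "y \<in> hiS b"
    then obtain c where c: "b < of_rat c" "\<And>m. \<exists>n>m. of_rat c * real n < (\<Sum>k<n. y k)"
      unfolding hiS_def by auto
    define c' where "c' = (c + r) / 2"
    have c'1: "b < of_rat c'" "of_rat c' < (of_rat c :: real)"
      using c(1) unfolding c'_def r by (simp_all add: of_rat_add of_rat_divide)
    obtain N where N: "\<And>n. n \<ge> N \<Longrightarrow> y 0 - of_rat c \<le> (of_rat c - of_rat c') * real n"
      using big_nat[of "of_rat c - of_rat c'" "y 0 - of_rat c"] c'1 by auto
    have "\<exists>n>m. of_rat c' * real n < (\<Sum>k<n. shf y k)" for m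
    proof -
      obtain n where n: "n > Suc (m + N)" "of_rat c * real n < (\<Sum>k<n. y k)" using c(2) by blast
      then obtain n' where n': "n = Suc n'" by (cases n) auto
      have "of_rat c' * real n' \<le> of_rat c * real (Suc n') - y 0"
        using N[of n'] n(1) n' by (simp add: algebra_simps)
      also have "\<dots> < (\<Sum>k<n'. shf y k)" using n(2) n' psum_shf[of y n'] by simp
      finally show ?thesis using n(1) n' by (intro exI[of _ n']) auto
    qed
    then show "shf y \<in> hiS b" unfolding hiS_def using c'1 by auto
  qed
qed

lemma loS_inv:
  assumes "b \<in> \<rat>"
  shows "shf y \<in> loS b \<longleftrightarrow> y \<in> loS b"
proof -
  obtain r where r: "b = of_rat r" using assms Rats_cases by blast
  show ?thesis
  proof
    assume "shf y \<in> loS b"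
    then obtain c where c: "of_rat c < b" "\<And>m. \<exists>n>m. (\<Sum>k<n. shf y k) < of_rat c * real n"
      unfolding loS_def by auto
    define c' where "c' = (c + r) / 2"
    have c'1: "of_rat c' < b" "(of_rat c :: real) < of_rat c'"
      using c(1) unfolding c'_def r by (simp_all add: of_rat_add of_rat_divide)
    obtain N where N: "\<And>n. n \<ge> N \<Longrightarrow> y 0 - of_rat c' \<le> (of_rat c' - of_rat c) * real n"
      using big_nat[of "of_rat c' - of_rat c" "y 0 - of_rat c'"] c'1 by auto
    have "\<exists>n>m. (\<Sum>k<n. y k) < of_rat c' * real n" for m
    proof -
      obtain n where n: "n > m + N" "(\<Sum>k<n. shf y k) < of_rat c * real n" using c(2) by blast
      have "(\<Sum>k<Suc n. y k) < y 0 + of_rat c * real n" using n(2) psum_shf[of y n] by simp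
      also have "\<dots> \<le> of_rat c' * real (Suc n)"
        using N[of n] n(1) by (simp add: algebra_simps)
      finally show ?thesis using n(1) by (intro exI[of _ "Suc n"]) auto
    qed
    then show "y \<in> loS b" unfolding loS_def using c'1 by auto
  next
    assume "y \<in> loS b"
    then obtain c where c: "of_rat c < b" "\<And>m. \<exists>n>m. (\<Sum>k<n. y k) < of_rat c * real n"
      unfolding loS_def by auto
    define c' where "c' = (c + r) / 2"
    have c'1: "of_rat c' < b" "(of_rat c :: real) < of_rat c'"
      using c(1) unfolding c'_def r by (simp_all add: of_rat_add of_rat_divide)
    obtain N where N: "\<And>n. n \<ge> N \<Longrightarrow> of_rat c - y 0 \<le> (of_rat c' - of_rat c) * real n"
      using big_nat[of "of_rat c' - of_rat c" "of_rat c - y 0"] c'1 by auto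
    have "\<exists>n>m. (\<Sum>k<n. shf y k) < of_rat c' * real n" for m
    proof -
      obtain n where n: "n > Suc (m + N)" "(\<Sum>k<n. y k) < of_rat c * real n" using c(2) by blast
      then obtain n' where n': "n = Suc n'" by (cases n) auto
      have "(\<Sum>k<n'. shf y k) < of_rat c * real (Suc n') - y 0"
        using n(2) n' psum_shf[of y n'] by simp
      also have "\<dots> \<le> of_rat c' * real n'"
        using N[of n'] n(1) n' by (simp add: algebra_simps)
      finally show ?thesis using n(1) n' by (intro exI[of _ n']) auto
    qed
    then show "shf y \<in> loS b" unfolding loS_def using c'1 by auto
  qed
qed


lemma psum_pos_hi: "y \<in> hiS b \<Longrightarrow> \<exists>n. 0 < (\<Sum>k<n. 1 * y k + - b)"
proof -
  assume "y \<in> hiS b"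
  then obtain c where c: "b < of_rat c" "\<And>m. \<exists>n>m. of_rat c * real n < (\<Sum>k<n. y k)"
    unfolding hiS_def by auto
  obtain n where n: "n > 0" "of_rat c * real n < (\<Sum>k<n. y k)" using c(2)[of 0] by blast
  have "b * real n < of_rat c * real n" using n(1) c(1) by simp
  moreover have "(\<Sum>k<n. 1 * y k + - b) = (\<Sum>k<n. y k) - b * real n"
    by (simp add: sum_subtractf)
  ultimately show ?thesis using n by (intro exI[of _ n]) linarith
qed

lemma psum_pos_lo: "y \<in> loS a \<Longrightarrow> \<exists>n. 0 < (\<Sum>k<n. (-1) * y k + a)"
proof -
  assume "y \<in> loS a"
  then obtain c where c: "of_rat c < a" "\<And>m. \<exists>n>m. (\<Sum>k<n. y k) < of_rat c * real n"
    unfolding loS_def by auto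
  obtain n where n: "n > 0" "(\<Sum>k<n. y k) < of_rat c * real n" using c(2)[of 0] by blast
  have "of_rat c * real n < a * real n" using n(1) c(1) by simp
  moreover have "(\<Sum>k<n. (-1) * y k + a) = a * real n - (\<Sum>k<n. y k)"
    by (simp add: sum_subtractf)
  ultimately show ?thesis using n by (intro exI[of _ n]) linarith
qed

context stat_seq begin

lemma integrable_indB: "B \<in> sets seqM \<Longrightarrow> integrable nu (\<lambda>y. indicator B y * (a * y 0 + b))"
proof -
  assume [measurable]: "B \<in> sets seqM"
  have "integrable nu (\<lambda>y. \<bar>a\<bar> * \<bar>y 0\<bar> + \<bar>b\<bar>)" using int0 by auto
  then show ?thesis
    by (rule Bochner_Integration.integrable_bound)
       (auto simp: meas_nu_iff indicator_def abs_mult intro!: order.trans[OF abs_triangle_ineq])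
qed

lemma int_ind_const: "B \<in> sets seqM \<Longrightarrow> (\<integral>y. indicator B y * c \<partial>nu) = measure nu B * c"
  by (simp add: integral_indicator)

lemma null_lohi:
  assumes "a \<in> \<rat>" "b \<in> \<rat>" "a < b"
  shows "loS a \<inter> hiS b \<in> null_sets nu"
proof -
  let ?B = "loS a \<inter> hiS b"
  have Bm[measurable]: "?B \<in> sets seqM" by simp
  have inv: "shf y \<in> ?B \<longleftrightarrow> y \<in> ?B" for y using hiS_inv[OF assms(2)] loS_inv[OF assms(1)] by auto
  have 1: "0 \<le> (\<integral>y. indicator ?B y * (1 * y 0 + - b) \<partial>nu)"
    by (rule maximal[OF Bm inv]) (use psum_pos_hi in auto)
  have 2: "0 \<le> (\<integral>y. indicator ?B y * ((-1) * y 0 + a) \<partial>nu)"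
    by (rule maximal[OF Bm inv]) (use psum_pos_lo in auto)
  have "(\<integral>y. indicator ?B y * (1 * y 0 + - b) \<partial>nu) + (\<integral>y. indicator ?B y * ((-1) * y 0 + a) \<partial>nu)
      = (\<integral>y. indicator ?B y * (1 * y 0 + - b) + indicator ?B y * ((-1) * y 0 + a) \<partial>nu)"
    by (rule Bochner_Integration.integral_add[symmetric]) (rule integrable_indB, simp)+
  also have "\<dots> = (\<integral>y. indicator ?B y * (a - b) \<partial>nu)"
    by (rule Bochner_Integration.integral_cong) (auto simp: algebra_simps)
  also have "\<dots> = measure nu ?B * (a - b)" by (rule int_ind_const) simp
  finally have "0 \<le> measure nu ?B * (a - b)" using 1 2 by linarith
  then have "measure nu ?B \<le> 0" using assms(3) by (smt (verit) mult_pos_neg)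
  then have "measure nu ?B = 0" using measure_nonneg[of nu ?B] by linarith
  then show ?thesis by (simp add: emeasure_eq_measure null_sets_def sets_nu)
qed

lemma K_bound: "B \<in> sets seqM \<Longrightarrow> \<bar>\<integral>y. indicator B y * y 0 \<partial>nu\<bar> \<le> (\<integral>y. \<bar>y 0\<bar> \<partial>nu)"
proof -
  assume [measurable]: "B \<in> sets seqM"
  have "\<bar>\<integral>y. indicator B y * y 0 \<partial>nu\<bar> \<le> (\<integral>y. \<bar>indicator B y * y 0\<bar> \<partial>nu)"
    by (rule integral_abs_bound)
  also have "\<dots> \<le> (\<integral>y. \<bar>y 0\<bar> \<partial>nu)"
    using integrable_indB[of B 1 0] int0
    by (intro integral_mono) (auto simp: indicator_def)
  finally show ?thesis .
qed

lemma small_measure: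
  assumes "\<And>j::nat. real j * measure nu B \<le> K"
  shows "measure nu B = 0"
proof (rule ccontr)
  assume "measure nu B \<noteq> 0"
  then have p: "measure nu B > 0" using measure_nonneg[of nu B] by linarith
  obtain j :: nat where "K / measure nu B < real j" using reals_Archimedean2 by blast
  then have "K < real j * measure nu B" using p by (simp add: field_simps)
  then show False using assms[of j] by linarith
qed

lemma null_hi: "(\<Inter>j::nat. hiS (real j)) \<in> null_sets nu"
proof -
  let ?B = "\<Inter>j::nat. hiS (real j)"
  have Bm[measurable]: "?B \<in> sets seqM" by measurable
  have inv: "shf y \<in> ?B \<longleftrightarrow> y \<in> ?B" for y using hiS_inv[OF Rats_of_nat] by auto
  have "real j * measure nu ?B \<le> (\<integral>y. \<bar>y 0\<bar> \<partial>nu)" for j :: nat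
  proof -
    have 1: "0 \<le> (\<integral>y. indicator ?B y * (1 * y 0 + - real j) \<partial>nu)"
      by (rule maximal[OF Bm inv]) (use psum_pos_hi in auto)
    have "(\<integral>y. indicator ?B y * (1 * y 0 + - real j) \<partial>nu)
        = (\<integral>y. indicator ?B y * y 0 + indicator ?B y * (- real j) \<partial>nu)"
      by (rule Bochner_Integration.integral_cong) (auto simp: algebra_simps)
    also have "\<dots> = (\<integral>y. indicator ?B y * y 0 \<partial>nu) + (\<integral>y. indicator ?B y * (- real j) \<partial>nu)"
      using integrable_indB[of ?B 1 0] integrable_indB[of ?B 0 "- real j"]
      by (intro Bochner_Integration.integral_add) simp_all
    also have "\<dots> = (\<integral>y. indicator ?B y * y 0 \<partial>nu) - measure nu ?B * real j"
      by (subst int_ind_const) simp_all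
    finally show ?thesis using 1 K_bound[OF Bm] by (simp add: algebra_simps)
  qed
  then have "measure nu ?B = 0" by (rule small_measure)
  then show ?thesis by (simp add: emeasure_eq_measure null_sets_def sets_nu)
qed

lemma null_lo: "(\<Inter>j::nat. loS (- real j)) \<in> null_sets nu"
proof -
  let ?B = "\<Inter>j::nat. loS (- real j)"
  have Bm[measurable]: "?B \<in> sets seqM" by measurable
  have inv: "shf y \<in> ?B \<longleftrightarrow> y \<in> ?B" for y using loS_inv[of "- real _"] by (auto simp: Rats_minus_iff)
  have "real j * measure nu ?B \<le> (\<integral>y. \<bar>y 0\<bar> \<partial>nu)" for j :: nat
  proof -
    have 1: "0 \<le> (\<integral>y. indicator ?B y * ((-1) * y 0 + - real j) \<partial>nu)"
      by (rule maximal[OF Bm inv]) (rule psum_pos_lo, blast)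
    have "(\<integral>y. indicator ?B y * ((-1) * y 0 + - real j) \<partial>nu)
        = (\<integral>y. indicator ?B y * ((-1) * y 0) + indicator ?B y * (- real j) \<partial>nu)"
      by (rule Bochner_Integration.integral_cong) (auto simp: algebra_simps)
    also have "\<dots> = (\<integral>y. indicator ?B y * ((-1) * y 0) \<partial>nu) + (\<integral>y. indicator ?B y * (- real j) \<partial>nu)"
      using integrable_indB[of ?B "-1" 0] integrable_indB[of ?B 0 "- real j"]
      by (intro Bochner_Integration.integral_add) simp_all
    also have "\<dots> = - (\<integral>y. indicator ?B y * y 0 \<partial>nu) - measure nu ?B * real j"
      by (subst int_ind_const) simp_all
    finally show ?thesis using 1 K_bound[OF Bm] by (simp add: algebra_simps)
  qed
  then have "measure nu ?B = 0" by (rule small_measure)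
  then show ?thesis by (simp add: emeasure_eq_measure null_sets_def sets_nu)
qed

end

lemma conv_from_good:
  fixes y :: "nat \<Rightarrow> real"
  assumes no_osc: "\<And>r s::rat. r < s \<Longrightarrow> y \<notin> loS (of_rat r) \<inter> hiS (of_rat s)"
    and nh: "y \<notin> (\<Inter>j::nat. hiS (real j))" and nl: "y \<notin> (\<Inter>j::nat. loS (- real j))"
  shows "convergent (\<lambda>n. (\<Sum>k<n. y k) / real n)"
proof -
  define A where "A n = (\<Sum>k<n. y k) / real n" for n
  define u where "u n = ereal (A n)" for n
  obtain j :: nat where j: "y \<notin> hiS (real j)" using nh by blast
  obtain j' :: nat where j': "y \<notin> loS (- real j')" using nl by blast
  have ev1: "eventually (\<lambda>n. u n \<le> ereal (real j + 1)) sequentially"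
  proof -
    have c0: "of_rat (of_nat j + 1 :: rat) = real j + 1" by (simp add: of_rat_add)
    have "\<not> (\<forall>m. \<exists>n>m. of_rat (of_nat j + 1) * real n < (\<Sum>k<n. y k))"
    proof
      assume "\<forall>m. \<exists>n>m. of_rat (of_nat j + 1) * real n < (\<Sum>k<n. y k)"
      then have "y \<in> hiS (real j)" unfolding hiS_def using c0
        by (intro CollectI exI[of _ "of_nat j + 1"]) simp
      then show False using j by simp
    qed
    then obtain m where m0: "\<And>n. n > m \<Longrightarrow> \<not> (of_rat (of_nat j + 1) * real n < (\<Sum>k<n. y k))"
      by blast
    have m: "(\<Sum>k<n. y k) \<le> (real j + 1) * real n" if "n > m" for n
      using m0[OF that] c0 by (simp add: not_less)
    show ?thesis
    proof (rule eventually_sequentiallyI[of "Suc m"])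
      fix n assume "Suc m \<le> n"
      then have "(\<Sum>k<n. y k) \<le> (real j + 1) * real n" "n > 0" using m by auto
      then show "u n \<le> ereal (real j + 1)" unfolding u_def A_def by (simp add: divide_le_eq)
    qed
  qed
  have ev2: "eventually (\<lambda>n. ereal (- real j' - 1) \<le> u n) sequentially"
  proof -
    have c0: "of_rat (- of_nat j' - 1 :: rat) = - real j' - 1" by (simp add: of_rat_diff of_rat_minus)
    have "\<not> (\<forall>m. \<exists>n>m. (\<Sum>k<n. y k) < of_rat (- of_nat j' - 1) * real n)"
    proof
      assume "\<forall>m. \<exists>n>m. (\<Sum>k<n. y k) < of_rat (- of_nat j' - 1) * real n"
      then have "y \<in> loS (- real j')" unfolding loS_def using c0
        by (intro CollectI exI[of _ "- of_nat j' - 1"]) simp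
      then show False using j' by simp
    qed
    then obtain m where m0: "\<And>n. n > m \<Longrightarrow> \<not> ((\<Sum>k<n. y k) < of_rat (- of_nat j' - 1) * real n)"
      by blast
    have m: "(- real j' - 1) * real n \<le> (\<Sum>k<n. y k)" if "n > m" for n
      using m0[OF that] c0 by (simp add: not_less)
    show ?thesis
    proof (rule eventually_sequentiallyI[of "Suc m"])
      fix n assume "Suc m \<le> n"
      then have "(- real j' - 1) * real n \<le> (\<Sum>k<n. y k)" "n > 0" using m by auto
      then show "ereal (- real j' - 1) \<le> u n" unfolding u_def A_def by (simp add: le_divide_eq)
    qed
  qed
  let ?l = "Liminf sequentially u" and ?L = "Limsup sequentially u"
  have lL: "?l \<le> ?L" by (rule Liminf_le_Limsup) simp
  have Lb: "?L \<le> ereal (real j + 1)" by (rule Limsup_bounded[OF ev1])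
  have lb: "ereal (- real j' - 1) \<le> ?l" by (rule Liminf_bounded[OF ev2])
  have eq: "?l = ?L"
  proof (rule ccontr)
    assume "?l \<noteq> ?L"
    then have "?l < ?L" using lL by simp
    then obtain r1 where r1: "?l < ereal r1" "ereal r1 < ?L" using ereal_dense2 by blast
    then obtain r2 where r2: "ereal r1 < ereal r2" "ereal r2 < ?L" using ereal_dense2 by blast
    have "r1 < r2" using r2 by simp
    obtain c where c: "c \<in> \<rat>" "r1 < c" "c < r2" using Rats_dense_in_real[OF \<open>r1 < r2\<close>] by blast
    obtain a where a: "a \<in> \<rat>" "c < a" "a < r2" using Rats_dense_in_real[OF c(3)] by blast
    obtain b where b: "b \<in> \<rat>" "a < b" "b < r2" using Rats_dense_in_real[OF a(3)] by blast
    obtain c' where c': "c' \<in> \<rat>" "b < c'" "c' < r2" using Rats_dense_in_real[OF b(3)] by blast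
    obtain rc where rc: "c = of_rat rc" using c(1) Rats_cases by blast
    obtain ra where ra: "a = of_rat ra" using a(1) Rats_cases by blast
    obtain rb where rb: "b = of_rat rb" using b(1) Rats_cases by blast
    obtain rc' where rc': "c' = of_rat rc'" using c'(1) Rats_cases by blast
    have f1: "\<exists>n>m. A n < r1" for m
    proof -
      have "\<not> (ereal r1 \<le> ?l)" using r1 by simp
      then obtain z where z: "z < ereal r1" "\<not> eventually (\<lambda>n. z < u n) sequentially"
        unfolding le_Liminf_iff by blast
      then have "frequently (\<lambda>n. u n \<le> z) sequentially"
        by (simp add: not_eventually not_less)
      then obtain n where n: "n \<ge> Suc m" "u n \<le> z" unfolding frequently_sequentially by blast
      have "ereal (A n) < ereal r1" using n(2) z(1) unfolding u_def by (rule order.strict_trans1)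
      then show ?thesis using n(1) by (intro exI[of _ n]) auto
    qed
    have f2: "\<exists>n>m. r2 < A n" for m
    proof -
      have "\<not> (?L \<le> ereal r2)" using r2 by simp
      then obtain z where z: "z > ereal r2" "\<not> eventually (\<lambda>n. u n < z) sequentially"
        unfolding Limsup_le_iff by blast
      then have "frequently (\<lambda>n. z \<le> u n) sequentially"
        by (simp add: not_eventually not_less)
      then obtain n where n: "n \<ge> Suc m" "z \<le> u n" unfolding frequently_sequentially by blast
      have "ereal r2 < ereal (A n)" using z(1) n(2) unfolding u_def by (rule order.strict_trans2)
      then show ?thesis using n(1) by (intro exI[of _ n]) auto
    qed
    have "y \<in> loS a"
    proof -
      have "\<exists>n>m. (\<Sum>k<n. y k) < of_rat rc * real n" for m
      proof -
        obtain n where n: "n > m" "A n < r1" using f1 by blast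
        then have "A n < c" using c by simp
        then show ?thesis using n(1) unfolding A_def rc by (intro exI[of _ n]) (simp add: divide_less_eq)
      qed
      then show ?thesis unfolding loS_def using a(2) rc by auto
    qed
    moreover have "y \<in> hiS b"
    proof -
      have "\<exists>n>m. of_rat rc' * real n < (\<Sum>k<n. y k)" for m
      proof -
        obtain n where n: "n > m" "r2 < A n" using f2 by blast
        then have "c' < A n" using c' by simp
        then show ?thesis using n(1) unfolding A_def rc' by (intro exI[of _ n]) (simp add: less_divide_eq)
      qed
      then show ?thesis unfolding hiS_def using b(2) c'(2) rc' by auto
    qed
    ultimately show False using no_osc[of ra rb] a(2) b(2) ra rb by (auto simp: of_rat_less)
  qed
  obtain q where q: "?L = ereal q" using Lb lL lb eq by (cases ?L) auto
  have "u \<longlonglongrightarrow> ereal q" using eq q by (subst tendsto_iff_Liminf_eq_Limsup) auto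
  then have "A \<longlonglongrightarrow> q" unfolding u_def lim_ereal .
  then show ?thesis unfolding A_def convergent_def by blast
qed

context stat_seq begin

theorem birkhoff: "AE y in nu. convergent (\<lambda>n. (\<Sum>k<n. y k) / real n)"
proof -
  have "AE y in nu. \<forall>p\<in>{p::rat\<times>rat. fst p < snd p}. y \<notin> loS (of_rat (fst p)) \<inter> hiS (of_rat (snd p))"
  proof (rule AE_ball_countable')
    fix p :: "rat \<times> rat" assume "p \<in> {p::rat\<times>rat. fst p < snd p}"
    then show "AE y in nu. y \<notin> loS (of_rat (fst p)) \<inter> hiS (of_rat (snd p))"
      by (intro AE_not_in null_lohi) (auto simp: of_rat_less)
  qed (rule countableI_type)
  moreover have "AE y in nu. y \<notin> (\<Inter>j::nat. hiS (real j))" by (rule AE_not_in[OF null_hi])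
  moreover have "AE y in nu. y \<notin> (\<Inter>j::nat. loS (- real j))" by (rule AE_not_in[OF null_lo])
  ultimately show ?thesis
  proof eventually_elim
    case (elim y)
    show ?case
    proof (rule conv_from_good)
      fix r s :: rat assume "r < s"
      then show "y \<notin> loS (of_rat r) \<inter> hiS (of_rat s)" using elim(1) by fastforce
    qed (use elim in auto)
  qed
qed

end

lemma cont_on_ge0:
  fixes f :: "real \<Rightarrow> 'a::topological_space"
  assumes "\<And>b. b \<ge> 0 \<Longrightarrow> continuous_on {0..b} f"
  shows "continuous_on {0..} f"
  unfolding continuous_on_eq_continuous_within
proof (intro ballI)
  fix x :: real assume x: "x \<in> {0..}"
  have "continuous (at x within {0..x+1}) f"
    using assms[of "x+1"] x by (simp add: continuous_on_eq_continuous_within)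
  moreover have "at x within {0..} = at x within {0..x+1}"
    by (rule at_within_nhd[of x "{..<x+1}"]) auto
  ultimately show "continuous (at x within {0..}) f" by simp
qed

lemma cont_sub: "continuous_on {0..} f \<Longrightarrow> continuous_on {0..b} f"
  by (rule continuous_on_subset) auto

lemma int_cont: "continuous_on {0..} f \<Longrightarrow> f integrable_on {0..b}"
  for f :: "real \<Rightarrow> real"
  by (rule integrable_continuous_interval, rule cont_sub)

lemma indef_cont:
  fixes g :: "real \<Rightarrow> real"
  assumes "continuous_on {0..} g"
  shows "continuous_on {0..} (\<lambda>t. integral {0..t} g)"
  by (rule cont_on_ge0, rule indefinite_integral_continuous_1, rule int_cont[OF assms])

lemma int_split:
  fixes f :: "real \<Rightarrow> real"
  assumes "continuous_on {0..} f" "0 \<le> S" "S \<le> t"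
  shows "integral {0..t} f = integral {0..S} f + integral {S..t} f"
  using Henstock_Kurzweil_Integration.integral_combine[OF assms(2) assms(3) int_cont[OF assms(1)]] by simp

lemma err_lemma:
  fixes e g :: "real \<Rightarrow> real"
  assumes ce: "continuous_on {0..} e" and cg: "continuous_on {0..} g"
    and e0: "((\<lambda>s. e s / s ^ k) \<longlongrightarrow> 0) at_top"
    and C: "eventually (\<lambda>t. integral {0..t} (\<lambda>s. \<bar>g s\<bar>) \<le> C * t) at_top"
  shows "((\<lambda>t. integral {0..t} (\<lambda>s. e s * g s) / t ^ (k+1)) \<longlongrightarrow> 0) at_top"
proof -
  define C' where "C' = \<bar>C\<bar> + 1"
  have C'pos: "C' > 0" unfolding C'_def by simp
  have ceg: "continuous_on {0..} (\<lambda>s. \<bar>e s * g s\<bar>)"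
    by (intro continuous_intros ce cg)
  have cag: "continuous_on {0..} (\<lambda>s. \<bar>g s\<bar>)" by (intro continuous_intros cg)
  show ?thesis
  proof (rule tendstoI)
    fix \<epsilon> :: real assume \<epsilon>: "\<epsilon> > 0"
    define \<delta> where "\<delta> = \<epsilon> / (2 * C')"
    have \<delta>: "\<delta> > 0" using \<epsilon> C'pos unfolding \<delta>_def by simp
    have "eventually (\<lambda>s. dist (e s / s ^ k) 0 < \<delta>) at_top"
      using e0 \<delta> by (rule tendstoD)
    moreover have "eventually (\<lambda>s::real. s > 0) at_top" using eventually_gt_at_top[of "0::real"] by simp
    ultimately have "eventually (\<lambda>s. \<bar>e s\<bar> \<le> \<delta> * s ^ k) at_top"
    proof eventually_elim
      case (elim s)
      then have "\<bar>e s\<bar> / s ^ k < \<delta>" by (simp add: abs_divide)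
      then show ?case using elim(2) by (simp add: divide_less_eq)
    qed
    then obtain S1 where S1: "\<And>s. s \<ge> S1 \<Longrightarrow> \<bar>e s\<bar> \<le> \<delta> * s ^ k"
      unfolding eventually_at_top_linorder by blast
    obtain T0 where T0: "\<And>t. t \<ge> T0 \<Longrightarrow> integral {0..t} (\<lambda>s. \<bar>g s\<bar>) \<le> C * t"
      using C unfolding eventually_at_top_linorder by blast
    define S where "S = max (max S1 T0) 1"
    define K where "K = integral {0..S} (\<lambda>s. \<bar>e s * g s\<bar>)"
    have "eventually (\<lambda>t. t \<ge> max S (2 * \<bar>K\<bar> / \<epsilon> + 1)) at_top" by (rule eventually_ge_at_top)
    then show "eventually (\<lambda>t. dist (integral {0..t} (\<lambda>s. e s * g s) / t ^ (k+1)) 0 < \<epsilon>) at_top"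
    proof eventually_elim
      case (elim t)
      have tS: "t \<ge> S" and S1t: "S \<ge> 1" and tK: "t > 2 * \<bar>K\<bar> / \<epsilon>" using elim unfolding S_def by auto
      have t1: "t \<ge> 1" using tS S1t by linarith
      have S0: "S \<ge> 0" using S1t by linarith
      have ig: "integral {0..t} (\<lambda>s. \<bar>g s\<bar>) \<le> C' * t"
        using T0[of t] tS t1 unfolding S_def C'_def by (smt (verit) max.cobounded2 max.coboundedI1 mult_right_mono abs_ge_self)
      have "\<bar>integral {0..t} (\<lambda>s. e s * g s)\<bar> \<le> integral {0..t} (\<lambda>s. \<bar>e s * g s\<bar>)"
        using integral_norm_bound_integral[of "\<lambda>s. e s * g s" "{0..t}" "\<lambda>s. \<bar>e s * g s\<bar>"]
          int_cont[OF ceg, of t] int_cont[of "\<lambda>s. e s * g s" t] ce cg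
        by (auto intro: continuous_intros)
      also have "\<dots> = K + integral {S..t} (\<lambda>s. \<bar>e s * g s\<bar>)"
        unfolding K_def by (rule int_split[OF ceg S0 tS])
      also have "integral {S..t} (\<lambda>s. \<bar>e s * g s\<bar>) \<le> integral {S..t} (\<lambda>s. \<delta> * t ^ k * \<bar>g s\<bar>)"
      proof (rule integral_le)
        show "(\<lambda>s. \<bar>e s * g s\<bar>) integrable_on {S..t}"
          by (rule integrable_continuous_interval, rule continuous_on_subset[OF ceg]) (use S0 in auto)
        show "(\<lambda>s. \<delta> * t ^ k * \<bar>g s\<bar>) integrable_on {S..t}"
          by (rule integrable_continuous_interval, rule continuous_on_subset[of "{0..}"])
             (use S0 cag in \<open>auto intro!: continuous_intros\<close>)
        fix s assume s: "s \<in> {S..t}"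
        then have "s \<ge> S1" "s \<ge> 0" using S0 unfolding S_def by auto
        then have "\<bar>e s\<bar> \<le> \<delta> * s ^ k" using S1 by blast
        also have "\<dots> \<le> \<delta> * t ^ k" using s \<open>s \<ge> 0\<close> \<delta> by (auto intro!: mult_left_mono power_mono)
        finally show "\<bar>e s * g s\<bar> \<le> \<delta> * t ^ k * \<bar>g s\<bar>" by (simp add: abs_mult mult_right_mono)
      qed
      also have "integral {S..t} (\<lambda>s. \<delta> * t ^ k * \<bar>g s\<bar>) = \<delta> * t ^ k * integral {S..t} (\<lambda>s. \<bar>g s\<bar>)"
        by (rule integral_mult_right)
      also have "integral {S..t} (\<lambda>s. \<bar>g s\<bar>) \<le> integral {0..t} (\<lambda>s. \<bar>g s\<bar>)"
      proof -
        have "0 \<le> integral {0..S} (\<lambda>s. \<bar>g s\<bar>)"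
          by (rule integral_nonneg) (use int_cont[OF cag] in auto)
        then show ?thesis using int_split[OF cag S0 tS] by linarith
      qed
      also have "\<dots> \<le> C' * t" by (rule ig)
      finally have b1: "\<bar>integral {0..t} (\<lambda>s. e s * g s)\<bar> \<le> \<bar>K\<bar> + \<delta> * C' * t ^ (k+1)"
        using \<delta> t1 by (auto simp: mult_left_mono algebra_simps)
      have tp: "t ^ (k+1) \<ge> t" using t1 by (metis le_add2 power_increasing power_one_right)
      have tpos: "t ^ (k+1) > 0" using t1 by simp
      have "\<bar>integral {0..t} (\<lambda>s. e s * g s) / t ^ (k+1)\<bar> \<le> \<bar>K\<bar> / t ^ (k+1) + \<delta> * C'"
        using b1 tpos by (simp add: abs_divide divide_le_eq algebra_simps)
      also have "\<bar>K\<bar> / t ^ (k+1) \<le> \<bar>K\<bar> / t" using tp t1 by (intro divide_left_mono) auto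
      also have "\<bar>K\<bar> / t < \<epsilon> / 2" using tK t1 \<epsilon> by (simp add: field_simps)
      also have "\<delta> * C' = \<epsilon> / 2" unfolding \<delta>_def using C'pos by simp
      finally show ?case by simp
    qed
  qed
qed


lemma int_power:
  assumes "t \<ge> 0"
  shows "integral {0..t} (\<lambda>s. s ^ m) = t ^ (m+1) / real (m+1)"
proof -
  have "((\<lambda>s. s ^ m) has_integral (t ^ (m+1) / real (m+1) - 0 ^ (m+1) / real (m+1))) {0..t}"
  proof (rule fundamental_theorem_of_calculus)
    fix s assume "s \<in> {0..t}"
    have "((\<lambda>s. s ^ (m+1) / real (m+1)) has_real_derivative s ^ m) (at s within {0..t})"
      by (auto intro!: derivative_eq_intros simp del: power_Suc)
    then show "((\<lambda>s. s ^ (m+1) / real (m+1)) has_vector_derivative s ^ m) (at s within {0..t})"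
      by (simp add: has_real_derivative_iff_has_vector_derivative)
  qed (use assms in auto)
  then show ?thesis by (simp add: integral_unique)
qed

lemma comp_cont: "continuous_on S x \<Longrightarrow> continuous_on S (\<lambda>s. x s $ i)"
  by (intro continuous_intros)


lemma ibp_power:
  fixes g :: "real \<Rightarrow> real"
  assumes cg: "continuous_on {0..} g" and t: "t \<ge> 0"
  shows "integral {0..t} (\<lambda>s. s ^ k * g s)
       = t ^ k * integral {0..t} g - real k * integral {0..t} (\<lambda>s. s ^ (k-1) * integral {0..s} g)"
proof -
  define G where "G s = integral {0..s} g" for s
  define H where "H s = integral {0..s} (\<lambda>u. u ^ (k-1) * G u)" for s
  have cG: "continuous_on {0..} G" unfolding G_def by (rule indef_cont[OF cg])
  have cH: "continuous_on {0..} (\<lambda>u. u ^ (k-1) * G u)" by (intro continuous_intros cG)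
  have "((\<lambda>s. s ^ k * g s) has_integral
        ((t ^ k * G t - real k * H t) - (0 ^ k * G 0 - real k * H 0))) {0..t}"
  proof (rule fundamental_theorem_of_calculus)
    fix s assume s: "s \<in> {0..t}"
    have dG: "(G has_real_derivative g s) (at s within {0..t})"
      unfolding G_def by (rule integral_has_real_derivative[OF cont_sub[OF cg] s])
    have dH: "(H has_real_derivative s ^ (k-1) * G s) (at s within {0..t})"
      unfolding H_def by (rule integral_has_real_derivative[OF cont_sub[OF cH] s])
    have "((\<lambda>s. s ^ k * G s - real k * H s) has_real_derivative s ^ k * g s) (at s within {0..t})"
      by (rule derivative_eq_intros dG dH refl | simp add: algebra_simps)+
    then show "((\<lambda>s. s ^ k * G s - real k * H s) has_vector_derivative s ^ k * g s) (at s within {0..t})"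
      by (simp add: has_real_derivative_iff_has_vector_derivative)
  qed (use t in auto)
  moreover have "G 0 = 0" "H 0 = 0" unfolding G_def H_def by auto
  ultimately show ?thesis unfolding G_def H_def by (simp add: integral_unique)
qed

lemma avg_lemma:
  fixes h :: "real \<Rightarrow> real"
  assumes ch: "continuous_on {0..} h" and hl: "((\<lambda>s. h s / s ^ m) \<longlongrightarrow> L) at_top"
  shows "((\<lambda>t. integral {0..t} h / t ^ (m+1)) \<longlongrightarrow> L / real (m+1)) at_top"
proof -
  define e where "e s = h s - L * s ^ m" for s
  have ce: "continuous_on {0..} e" unfolding e_def by (intro continuous_intros ch)
  have "((\<lambda>s. h s / s ^ m - L) \<longlongrightarrow> L - L) at_top" by (intro tendsto_intros hl)
  then have "((\<lambda>s. h s / s ^ m - L) \<longlongrightarrow> 0) at_top" by simp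
  moreover have "eventually (\<lambda>s. h s / s ^ m - L = e s / s ^ m) at_top"
    using eventually_gt_at_top[of "0::real"] by eventually_elim (simp add: e_def field_simps)
  ultimately have e0: "((\<lambda>s. e s / s ^ m) \<longlongrightarrow> 0) at_top" by (rule Lim_transform_eventually)
  have c1: "continuous_on {0..} (\<lambda>s::real. 1::real)" by simp
  have C: "eventually (\<lambda>t. integral {0..t} (\<lambda>s. \<bar>1::real\<bar>) \<le> 1 * t) at_top"
    using eventually_ge_at_top[of "0::real"] by eventually_elim simp
  have lim1: "((\<lambda>t. integral {0..t} (\<lambda>s. e s * 1) / t ^ (m+1)) \<longlongrightarrow> 0) at_top"
    by (rule err_lemma[OF ce c1 e0 C])
  have "((\<lambda>t. integral {0..t} (\<lambda>s. e s * 1) / t ^ (m+1) + L / real (m+1)) \<longlongrightarrow> 0 + L / real (m+1)) at_top"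
    by (intro tendsto_intros lim1)
  moreover have "eventually (\<lambda>t. integral {0..t} (\<lambda>s. e s * 1) / t ^ (m+1) + L / real (m+1)
       = integral {0..t} h / t ^ (m+1)) at_top"
    using eventually_gt_at_top[of "0::real"]
  proof eventually_elim
    case (elim t)
    have "integral {0..t} h = integral {0..t} (\<lambda>s. e s + L * s ^ m)" unfolding e_def by simp
    also have "\<dots> = integral {0..t} e + L * integral {0..t} (\<lambda>s. s ^ m)"
      by (subst integral_add) (auto intro!: int_cont ce continuous_intros)
    also have "\<dots> = integral {0..t} e + L * (t ^ (m+1) / real (m+1))"
      using elim by (simp add: int_power)
    finally have eqh: "integral {0..t} h = integral {0..t} e + L * (t ^ (m+1) / real (m+1))" .
    have "t ^ (m+1) \<noteq> 0" using elim by simp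
    then show ?case by (simp add: eqh add_divide_distrib del: power_Suc)
  qed
  ultimately show ?thesis by (simp add: Lim_transform_eventually)
qed


lemma step_lemma:
  fixes F g :: "real \<Rightarrow> real"
  assumes cF: "continuous_on {0..} F" and cg: "continuous_on {0..} g"
    and Fl: "((\<lambda>t. F t / t ^ k) \<longlongrightarrow> c) at_top"
    and Gl: "((\<lambda>t. integral {0..t} g / t) \<longlongrightarrow> Q) at_top"
    and C: "eventually (\<lambda>t. integral {0..t} (\<lambda>s. \<bar>g s\<bar>) \<le> C * t) at_top"
  shows "((\<lambda>t. integral {0..t} (\<lambda>s. F s * g s) / t ^ (k+1)) \<longlongrightarrow> c * Q / real (k+1)) at_top"
proof -
  define G where "G s = integral {0..s} g" for s
  define e where "e s = F s - c * s ^ k" for s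
  have cG: "continuous_on {0..} G" unfolding G_def by (rule indef_cont[OF cg])
  have ce: "continuous_on {0..} e" unfolding e_def by (intro continuous_intros cF)
  have "((\<lambda>s. F s / s ^ k - c) \<longlongrightarrow> c - c) at_top" by (intro tendsto_intros Fl)
  then have "((\<lambda>s. F s / s ^ k - c) \<longlongrightarrow> 0) at_top" by simp
  moreover have "eventually (\<lambda>s. F s / s ^ k - c = e s / s ^ k) at_top"
    using eventually_gt_at_top[of "0::real"] by eventually_elim (simp add: e_def field_simps)
  ultimately have e0: "((\<lambda>s. e s / s ^ k) \<longlongrightarrow> 0) at_top" by (rule Lim_transform_eventually)
  have lim1: "((\<lambda>t. integral {0..t} (\<lambda>s. e s * g s) / t ^ (k+1)) \<longlongrightarrow> 0) at_top"
    by (rule err_lemma[OF ce cg e0 C])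
  have lim3: "((\<lambda>t. real k * (integral {0..t} (\<lambda>s. s ^ (k-1) * G s) / t ^ (k+1))) \<longlongrightarrow> real k * (Q / real (k+1))) at_top"
  proof (cases "k = 0")
    case True then show ?thesis by simp
  next
    case False
    have ch: "continuous_on {0..} (\<lambda>s. s ^ (k-1) * G s)" by (intro continuous_intros cG)
    have "eventually (\<lambda>s. integral {0..s} g / s = s ^ (k-1) * G s / s ^ k) at_top"
      using eventually_gt_at_top[of "0::real"]
    proof eventually_elim
      case (elim s)
      have "s ^ k = s ^ (k-1) * s" using False by (metis Suc_pred' neq0_conv power_Suc2)
      then show ?case using elim by (simp add: G_def)
    qed
    then have "((\<lambda>s. s ^ (k-1) * G s / s ^ k) \<longlongrightarrow> Q) at_top" by (rule Lim_transform_eventually[OF Gl])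
    then have "((\<lambda>t. integral {0..t} (\<lambda>s. s ^ (k-1) * G s) / t ^ (k+1)) \<longlongrightarrow> Q / real (k+1)) at_top"
      by (rule avg_lemma[OF ch])
    then show ?thesis by (rule tendsto_mult_left)
  qed
  have "((\<lambda>t. integral {0..t} (\<lambda>s. e s * g s) / t ^ (k+1)
        + c * (integral {0..t} g / t - real k * (integral {0..t} (\<lambda>s. s ^ (k-1) * G s) / t ^ (k+1))))
       \<longlongrightarrow> 0 + c * (Q - real k * (Q / real (k+1)))) at_top"
    by (intro tendsto_intros lim1 Gl lim3)
  moreover have "0 + c * (Q - real k * (Q / real (k+1))) = c * Q / real (k+1)"
    by (simp add: field_simps)
  moreover have "eventually (\<lambda>t. integral {0..t} (\<lambda>s. e s * g s) / t ^ (k+1)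
        + c * (integral {0..t} g / t - real k * (integral {0..t} (\<lambda>s. s ^ (k-1) * G s) / t ^ (k+1)))
       = integral {0..t} (\<lambda>s. F s * g s) / t ^ (k+1)) at_top"
    using eventually_gt_at_top[of "0::real"]
  proof eventually_elim
    case (elim t)
    have "integral {0..t} (\<lambda>s. F s * g s) = integral {0..t} (\<lambda>s. e s * g s + c * (s ^ k * g s))"
      unfolding e_def by (simp add: algebra_simps)
    also have "\<dots> = integral {0..t} (\<lambda>s. e s * g s) + c * integral {0..t} (\<lambda>s. s ^ k * g s)"
      by (subst integral_add) (auto intro!: int_cont ce cg continuous_intros)
    also have "integral {0..t} (\<lambda>s. s ^ k * g s)
        = t ^ k * integral {0..t} g - real k * integral {0..t} (\<lambda>s. s ^ (k-1) * G s)"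
      unfolding G_def by (rule ibp_power[OF cg]) (use elim in auto)
    finally have eq: "integral {0..t} (\<lambda>s. F s * g s) = integral {0..t} (\<lambda>s. e s * g s)
        + c * (t ^ k * integral {0..t} g - real k * integral {0..t} (\<lambda>s. s ^ (k-1) * G s))" .
    have tk: "t ^ k \<noteq> 0" "t \<noteq> 0" using elim by auto
    have "t ^ k * integral {0..t} g / t ^ (k+1) = integral {0..t} g / t" using tk by simp
    then show ?case unfolding eq using tk
      by (simp add: add_divide_distrib diff_divide_distrib algebra_simps del: power_Suc)
         (metis (no_types, lifting) mult.assoc times_divide_eq_right)
  qed
  ultimately show ?thesis using Lim_transform_eventually by fastforce
qed

lemma iter_lemma:
  fixes x :: "real \<Rightarrow> real ^ 'n" and Q :: "real ^ 'n"
  assumes cx: "continuous_on {0..} x"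
    and avg: "\<And>i. ((\<lambda>t. integral {0..t} (\<lambda>s. x s $ i) / t) \<longlongrightarrow> Q $ i) at_top"
    and bnd: "\<And>i. \<exists>C. eventually (\<lambda>t. integral {0..t} (\<lambda>s. \<bar>x s $ i\<bar>) \<le> C * t) at_top"
  shows "continuous_on {0..} (iter_int_rev x rs) \<and>
    ((\<lambda>t. iter_int_rev x rs t / t ^ length rs) \<longlongrightarrow> (\<Prod>i\<leftarrow>rs. Q $ i) / fact (length rs)) at_top"
proof (induction rs)
  case Nil
  then show ?case by (simp add: continuous_on_const)
next
  case (Cons i rs)
  have cF: "continuous_on {0..} (iter_int_rev x rs)" and
    Fl: "((\<lambda>t. iter_int_rev x rs t / t ^ length rs) \<longlongrightarrow> (\<Prod>i\<leftarrow>rs. Q $ i) / fact (length rs)) at_top"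
    using Cons by auto
  have cxi: "continuous_on {0..} (\<lambda>s. x s $ i)" by (rule comp_cont[OF cx])
  obtain C where C: "eventually (\<lambda>t. integral {0..t} (\<lambda>s. \<bar>x s $ i\<bar>) \<le> C * t) at_top"
    using bnd by blast
  have "((\<lambda>t. integral {0..t} (\<lambda>s. iter_int_rev x rs s * x s $ i) / t ^ (length rs + 1))
        \<longlongrightarrow> (\<Prod>i\<leftarrow>rs. Q $ i) / fact (length rs) * Q $ i / real (length rs + 1)) at_top"
    by (rule step_lemma[OF cF cxi Fl avg C])
  moreover have "(\<Prod>i\<leftarrow>rs. Q $ i) / fact (length rs) * Q $ i / real (length rs + 1)
      = (\<Prod>i\<leftarrow>i # rs. Q $ i) / fact (length (i # rs))"
    by (simp add: field_simps)
  ultimately have lim: "((\<lambda>t. iter_int_rev x (i # rs) t / t ^ length (i # rs))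
      \<longlongrightarrow> (\<Prod>i\<leftarrow>i # rs. Q $ i) / fact (length (i # rs))) at_top" by simp
  have "continuous_on {0..} (iter_int_rev x (i # rs))"
  proof -
    have "iter_int_rev x (i # rs) = (\<lambda>t. integral {0..t} (\<lambda>s. iter_int_rev x rs s * x s $ i))"
      by (rule ext) simp
    moreover have "continuous_on {0..} (\<lambda>t. integral {0..t} (\<lambda>s. iter_int_rev x rs s * x s $ i))"
      by (rule indef_cont) (intro continuous_intros cF cxi)
    ultimately show ?thesis by simp
  qed
  with lim show ?case by blast
qed

lemma piece_bound:
  fixes f :: "real \<Rightarrow> real"
  assumes cf: "continuous_on {u..v} f" and uv: "u \<le> v"
    and close: "\<And>s. s \<in> {u..v} \<Longrightarrow> \<bar>f s - f u\<bar> \<le> \<epsilon>"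
  shows "\<bar>integral {u..v} f - (v - u) * f u\<bar> \<le> (v - u) * \<epsilon>"
proof -
  have i1: "f integrable_on {u..v}" by (rule integrable_continuous_interval[OF cf])
  have i2: "(\<lambda>s. f s - f u) integrable_on {u..v}"
    by (rule integrable_continuous_interval) (intro continuous_intros cf)
  have i3: "(\<lambda>s. \<epsilon>) integrable_on {u..v}"
    by (rule integrable_continuous_interval) (rule continuous_on_const)
  have "integral {u..v} (\<lambda>s. f s - f u) = integral {u..v} f - integral {u..v} (\<lambda>s. f u)"
    by (rule integral_diff[OF i1]) (rule integrable_continuous_interval, rule continuous_on_const)
  then have e1: "integral {u..v} f - (v - u) * f u = integral {u..v} (\<lambda>s. f s - f u)"
    using uv by simp
  have "\<bar>integral {u..v} (\<lambda>s. f s - f u)\<bar> \<le> integral {u..v} (\<lambda>s. \<epsilon>)"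
    using integral_norm_bound_integral[OF i2 i3] close by auto
  also have "\<dots> = (v - u) * \<epsilon>" using uv by simp
  finally show ?thesis using e1 by simp
qed

lemma integral_split_sum:
  fixes f :: "real \<Rightarrow> real"
  assumes cf: "continuous_on {a..a+1} f" and m: "m > 0" and k: "k \<le> m"
  shows "integral {a..a + real k / real m} f
     = (\<Sum>j<k. integral {a + real j / real m..a + real (Suc j) / real m} f)"
  using k
proof (induction k)
  case 0 then show ?case by simp
next
  case (Suc k)
  have h1: "real (Suc k) / real m \<le> 1" using Suc.prems m by (simp add: divide_le_eq)
  then have sub: "{a..a + real (Suc k) / real m} \<subseteq> {a..a+1}" by auto
  have "integral {a..a + real k / real m} f + integral {a + real k / real m..a + real (Suc k) / real m} f
      = integral {a..a + real (Suc k) / real m} f"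
  proof (rule Henstock_Kurzweil_Integration.integral_combine)
    show "f integrable_on {a..a + real (Suc k) / real m}"
      by (rule integrable_continuous_interval, rule continuous_on_subset[OF cf sub])
  qed (use m in \<open>auto simp: divide_right_mono\<close>)
  then show ?case using Suc by simp
qed

lemma riemann:
  fixes f :: "real \<Rightarrow> real"
  assumes cf: "continuous_on {a..a+1} f"
  shows "(\<lambda>m. (\<Sum>j<m. f (a + real j / real m)) / real m) \<longlonglongrightarrow> integral {a..a+1} f"
proof (rule LIMSEQ_I)
  fix \<epsilon> :: real assume \<epsilon>: "\<epsilon> > 0"
  have "uniformly_continuous_on {a..a+1} f"
    by (rule compact_uniformly_continuous[OF cf compact_Icc])
  then obtain d where d: "d > 0" "\<And>x x'. x \<in> {a..a+1} \<Longrightarrow> x' \<in> {a..a+1} \<Longrightarrow> dist x' x < d \<Longrightarrow> dist (f x') (f x) < \<epsilon> / 2"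
    unfolding uniformly_continuous_on_def using \<epsilon> by (metis half_gt_zero)
  obtain M :: nat where M: "1 / d < real M" using reals_Archimedean2 by blast
  have "norm ((\<Sum>j<m. f (a + real j / real m)) / real m - integral {a..a+1} f) < \<epsilon>" if m: "m \<ge> Suc M" for m
  proof -
    have m0: "m > 0" using m by simp
    have md: "1 / real m < d"
    proof -
      have "1 / d < real m" using M m by linarith
      then show ?thesis using d(1) m0 by (simp add: field_simps)
    qed
    define u where "u j = a + real j / real m" for j
    have I: "integral {a..a+1} f = (\<Sum>j<m. integral {u j..u (Suc j)} f)"
      using integral_split_sum[OF cf m0 order.refl] m0 unfolding u_def by simp
    have piece: "\<bar>integral {u j..u (Suc j)} f - f (u j) / real m\<bar> \<le> (\<epsilon> / 2) / real m" if j: "j < m" for j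
    proof -
      have uj: "u (Suc j) - u j = 1 / real m" unfolding u_def by (simp add: add_divide_distrib)
      have ujin: "u j \<in> {a..a+1}" "u (Suc j) \<in> {a..a+1}" "u j \<le> u (Suc j)"
        using j m0 unfolding u_def by (auto simp: divide_le_eq)
      have "\<bar>integral {u j..u (Suc j)} f - (u (Suc j) - u j) * f (u j)\<bar> \<le> (u (Suc j) - u j) * (\<epsilon> / 2)"
      proof (rule piece_bound)
        show "continuous_on {u j..u (Suc j)} f" by (rule continuous_on_subset[OF cf]) (use ujin in auto)
        show "u j \<le> u (Suc j)" by (rule ujin)
        fix s assume s: "s \<in> {u j..u (Suc j)}"
        then have "s \<in> {a..a+1}" using ujin by auto
        moreover have "dist s (u j) < d" using s uj md by (auto simp: dist_real_def)
        ultimately have "dist (f s) (f (u j)) < \<epsilon> / 2" using d(2) ujin(1) by blast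
        then show "\<bar>f s - f (u j)\<bar> \<le> \<epsilon> / 2" by (simp add: dist_real_def)
      qed
      then show ?thesis using uj by simp
    qed
    have "\<bar>(\<Sum>j<m. f (u j)) / real m - integral {a..a+1} f\<bar>
        = \<bar>\<Sum>j<m. (integral {u j..u (Suc j)} f - f (u j) / real m)\<bar>"
      unfolding I by (simp add: sum_subtractf sum_divide_distrib abs_minus_commute)
    also have "\<dots> \<le> (\<Sum>j<m. \<bar>integral {u j..u (Suc j)} f - f (u j) / real m\<bar>)" by (rule sum_abs)
    also have "\<dots> \<le> (\<Sum>j<m. (\<epsilon> / 2) / real m)" by (rule sum_mono) (use piece in auto)
    also have "\<dots> = \<epsilon> / 2" using m0 by simp
    also have "\<dots> < \<epsilon>" using \<epsilon> by simp
    finally show ?thesis unfolding u_def by simp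
  qed
  then show "\<exists>no. \<forall>m\<ge>no. norm ((\<Sum>j<m. f (a + real j / real m)) / real m - integral {a..a+1} f) < \<epsilon>"
    by blast
qed

lemma int_nat:
  fixes h :: "real \<Rightarrow> real"
  assumes ch: "continuous_on {0..} h"
  shows "integral {0..real N} h = (\<Sum>k<N. integral {real k..real k + 1} h)"
proof (induction N)
  case 0 then show ?case by simp
next
  case (Suc N)
  have "integral {0..real (Suc N)} h = integral {0..real N} h + integral {real N..real (Suc N)} h"
    by (rule int_split[OF ch]) auto
  then show ?case using Suc by (simp add: add.commute)
qed

lemma nat_floor_lim: "filterlim (\<lambda>t::real. nat \<lfloor>t\<rfloor>) sequentially at_top"
  unfolding filterlim_at_top
proof
  fix Z :: nat
  show "eventually (\<lambda>t::real. Z \<le> nat \<lfloor>t\<rfloor>) at_top"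
    using eventually_ge_at_top[of "real Z"] by eventually_elim (simp add: le_nat_floor)
qed

lemma disc_to_cont:
  fixes g :: "real \<Rightarrow> real"
  assumes cg: "continuous_on {0..} g"
    and Y: "(\<lambda>N. (\<Sum>k<N. integral {real k..real k + 1} g) / real N) \<longlonglongrightarrow> q"
    and Z: "(\<lambda>N. (\<Sum>k<N. integral {real k..real k + 1} (\<lambda>s. \<bar>g s\<bar>)) / real N) \<longlonglongrightarrow> r"
  shows "((\<lambda>t. integral {0..t} g / t) \<longlongrightarrow> q) at_top"
    and "\<exists>C. eventually (\<lambda>t. integral {0..t} (\<lambda>s. \<bar>g s\<bar>) \<le> C * t) at_top"
proof -
  define z where "z n = integral {real n..real n + 1} (\<lambda>s. \<bar>g s\<bar>)" for n :: nat
  define zs where "zs N = (\<Sum>k<N. z k)" for N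
  define A where "A N = (\<Sum>k<N. integral {real k..real k + 1} g) / real N" for N
  define Nf where "Nf t = nat \<lfloor>t\<rfloor>" for t :: real
  have cag: "continuous_on {0..} (\<lambda>s. \<bar>g s\<bar>)" by (intro continuous_intros cg)
  have Z': "(\<lambda>N. zs N / real N) \<longlonglongrightarrow> r" using Z unfolding zs_def z_def .
  have z0: "z n \<ge> 0" for n unfolding z_def
    by (rule integral_nonneg) (auto intro!: integrable_continuous_interval continuous_on_subset[OF cag])
  have zlim: "(\<lambda>n. z n / real n) \<longlonglongrightarrow> 0"
  proof -
    have "(\<lambda>n. zs (Suc n) / real (Suc n) * (real (Suc n) / real n) - zs n / real n) \<longlonglongrightarrow> r * 1 - r"
      by (intro tendsto_intros LIMSEQ_Suc[OF Z'] Z' LIMSEQ_Suc_n_over_n)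
    moreover have "eventually (\<lambda>n. zs (Suc n) / real (Suc n) * (real (Suc n) / real n) - zs n / real n = z n / real n) sequentially"
    proof (rule always_eventually, intro allI)
      fix n
      have "zs (Suc n) / real (Suc n) * (real (Suc n) / real n) = zs (Suc n) / real n"
        by (simp del: of_nat_Suc)
      also have "\<dots> = zs n / real n + z n / real n" by (simp add: zs_def add_divide_distrib)
      finally show "zs (Suc n) / real (Suc n) * (real (Suc n) / real n) - zs n / real n = z n / real n" by simp
    qed
    ultimately show ?thesis by (simp add: Lim_transform_eventually)
  qed
  have ev: "eventually (\<lambda>t::real. t \<ge> 1) at_top" by (rule eventually_ge_at_top)
  have Nf_prop: "real (Nf t) \<le> t" "t < real (Nf t) + 1" "Nf t \<ge> 1" if "t \<ge> 1" for t
    using that unfolding Nf_def by (auto simp: le_nat_floor)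
  have NfL: "filterlim Nf sequentially at_top" unfolding Nf_def by (rule nat_floor_lim)
  show "((\<lambda>t. integral {0..t} g / t) \<longlongrightarrow> q) at_top"
  proof -
    have l1: "((\<lambda>t. A (Nf t)) \<longlongrightarrow> q) at_top"
      using Y unfolding A_def by (rule filterlim_compose[OF _ NfL])
    have l2: "((\<lambda>t. real (Nf t) / t) \<longlongrightarrow> 1) at_top"
    proof -
      have "((\<lambda>t. real (Nf t) / t - 1) \<longlongrightarrow> 0) at_top"
      proof (rule Lim_null_comparison)
        show "eventually (\<lambda>t. norm (real (Nf t) / t - 1) \<le> inverse t) at_top"
          using ev
        proof eventually_elim
          case (elim t)
          have "real (Nf t) / t - 1 = (real (Nf t) - t) / t" using elim by (simp add: field_simps)
          moreover have "\<bar>real (Nf t) - t\<bar> \<le> 1" using Nf_prop[OF elim] by linarith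
          ultimately show ?case using elim by (simp add: abs_divide divide_inverse divide_le_eq_1 abs_mult)
        qed
        show "((\<lambda>t::real. inverse t) \<longlongrightarrow> 0) at_top" by (rule tendsto_inverse_0_at_top[OF filterlim_ident])
      qed
      then show ?thesis by (simp add: LIM_zero_iff)
    qed
    have l3: "((\<lambda>t. integral {real (Nf t)..t} g / t) \<longlongrightarrow> 0) at_top"
    proof (rule Lim_null_comparison)
      show "((\<lambda>t. z (Nf t) / real (Nf t)) \<longlongrightarrow> 0) at_top" by (rule filterlim_compose[OF zlim NfL])
      show "eventually (\<lambda>t. norm (integral {real (Nf t)..t} g / t) \<le> z (Nf t) / real (Nf t)) at_top"
        using ev
      proof eventually_elim
        case (elim t)
        note P = Nf_prop[OF elim]
        have "\<bar>integral {real (Nf t)..t} g\<bar> \<le> integral {real (Nf t)..t} (\<lambda>s. \<bar>g s\<bar>)"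
          by (rule integral_norm_bound_integral[where f = g, simplified])
             (auto intro!: integrable_continuous_interval continuous_on_subset[OF cg] continuous_on_subset[OF cag])
        also have "\<dots> \<le> z (Nf t)"
        proof -
          have "integral {real (Nf t)..real (Nf t) + 1} (\<lambda>s. \<bar>g s\<bar>) = integral {real (Nf t)..t} (\<lambda>s. \<bar>g s\<bar>) + integral {t..real (Nf t) + 1} (\<lambda>s. \<bar>g s\<bar>)"
            using P by (intro Henstock_Kurzweil_Integration.integral_combine[symmetric])
               (auto intro!: integrable_continuous_interval continuous_on_subset[OF cag])
          moreover have "0 \<le> integral {t..real (Nf t) + 1} (\<lambda>s. \<bar>g s\<bar>)"
            using P elim by (intro integral_nonneg) (auto intro!: integrable_continuous_interval continuous_on_subset[OF cag])
          ultimately show ?thesis unfolding z_def by linarith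
        qed
        finally have b: "\<bar>integral {real (Nf t)..t} g\<bar> \<le> z (Nf t)" .
        have "\<bar>integral {real (Nf t)..t} g\<bar> / t \<le> z (Nf t) / t" using b elim by (simp add: divide_right_mono)
        also have "\<dots> \<le> z (Nf t) / real (Nf t)" using P z0 by (intro divide_left_mono) auto
        finally show ?case using elim by (simp add: abs_divide)
      qed
    qed
    have "((\<lambda>t. A (Nf t) * (real (Nf t) / t) + integral {real (Nf t)..t} g / t) \<longlongrightarrow> q * 1 + 0) at_top"
      by (intro tendsto_intros l1 l2 l3)
    moreover have "eventually (\<lambda>t. A (Nf t) * (real (Nf t) / t) + integral {real (Nf t)..t} g / t = integral {0..t} g / t) at_top"
      using ev
    proof eventually_elim
      case (elim t)
      note P = Nf_prop[OF elim]
      have "integral {0..t} g = integral {0..real (Nf t)} g + integral {real (Nf t)..t} g"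
        by (rule int_split[OF cg]) (use P in auto)
      then show ?case using P unfolding A_def by (simp add: int_nat[OF cg] add_divide_distrib)
    qed
    ultimately show ?thesis by (simp add: Lim_transform_eventually)
  qed
  show "\<exists>C. eventually (\<lambda>t. integral {0..t} (\<lambda>s. \<bar>g s\<bar>) \<le> C * t) at_top"
  proof -
    have "Bseq (\<lambda>N. zs N / real N)" using Z' by (rule convergent_imp_Bseq[OF convergentI])
    then obtain K where K: "K > 0" "\<And>N. norm (zs N / real N) \<le> K" by (auto elim: BseqE)
    have "eventually (\<lambda>t. integral {0..t} (\<lambda>s. \<bar>g s\<bar>) \<le> (2 * K) * t) at_top"
      using ev
    proof eventually_elim
      case (elim t)
      note P = Nf_prop[OF elim]
      have "integral {0..real (Suc (Nf t))} (\<lambda>s. \<bar>g s\<bar>) = integral {0..t} (\<lambda>s. \<bar>g s\<bar>) + integral {t..real (Suc (Nf t))} (\<lambda>s. \<bar>g s\<bar>)"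
        by (rule int_split[OF cag]) (use P elim in auto)
      moreover have "0 \<le> integral {t..real (Suc (Nf t))} (\<lambda>s. \<bar>g s\<bar>)"
        using P elim by (intro integral_nonneg) (auto intro!: integrable_continuous_interval continuous_on_subset[OF cag])
      moreover have "integral {0..real (Suc (Nf t))} (\<lambda>s. \<bar>g s\<bar>) = zs (Suc (Nf t))"
        unfolding zs_def z_def by (rule int_nat[OF cag])
      moreover have "zs (Suc (Nf t)) \<le> K * real (Suc (Nf t))"
      proof -
        have "zs (Suc (Nf t)) / real (Suc (Nf t)) \<le> K" using K(2)[of "Suc (Nf t)"] by (simp add: abs_le_iff divide_le_eq)
        then show ?thesis by (simp add: divide_le_eq)
      qed
      moreover have "K * real (Suc (Nf t)) \<le> 2 * K * t" using P K(1) elim by simp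
      ultimately show ?case by linarith
    qed
    then show ?thesis by blast
  qed
qed

definition PS :: "(real \<Rightarrow> 'a::topological_space) measure" where
  "PS = Pi\<^sub>M {0..} (\<lambda>_. borel)"

definition RS :: "('a \<Rightarrow> real) \<Rightarrow> (real \<Rightarrow> 'a) \<Rightarrow> real \<Rightarrow> nat \<Rightarrow> real" where
  "RS \<phi> p a m = (\<Sum>j<m. \<phi> (p (a + real j / real m))) / real m"

definition Phi :: "('a \<Rightarrow> real) \<Rightarrow> (real \<Rightarrow> 'a) \<Rightarrow> nat \<Rightarrow> real" where
  "Phi \<phi> p = (\<lambda>n. lim (RS \<phi> p (real n)))"

lemma RS_meas:
  assumes [measurable]: "\<phi> \<in> borel_measurable borel" and a: "a \<ge> 0"
  shows "(\<lambda>p. RS \<phi> p a m) \<in> borel_measurable (PS :: (real \<Rightarrow> 'a::topological_space) measure)"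
proof -
  have [measurable]: "(\<lambda>p. p (a + real j / real m)) \<in> (PS :: (real \<Rightarrow> 'a) measure) \<rightarrow>\<^sub>M borel" for j
    unfolding PS_def by (rule measurable_component_singleton) (use a in auto)
  show ?thesis unfolding RS_def by measurable
qed

lemma Phi_meas:
  assumes [measurable]: "\<phi> \<in> borel_measurable borel"
  shows "Phi \<phi> \<in> (PS :: (real \<Rightarrow> 'a::topological_space) measure) \<rightarrow>\<^sub>M seqM"
  unfolding seqM_def Phi_def
proof (rule measurable_PiM_single')
  fix n :: nat
  show "(\<lambda>p. lim (RS \<phi> p (real n))) \<in> borel_measurable PS"
    by (rule borel_measurable_lim_metric) (rule RS_meas, auto)
qed (auto simp: space_PiM)


locale setting =
  fixes M :: "'w measure" and xi :: "real \<Rightarrow> 'w \<Rightarrow> real ^ 'd"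
  assumes ps: "prob_space M"
    and meas: "\<And>t. t \<ge> 0 \<Longrightarrow> xi t \<in> borel_measurable M"
    and cont: "\<And>w. w \<in> space M \<Longrightarrow> continuous_on {0..} (\<lambda>t. xi t w)"
    and stat: "stationary_process M xi"
    and int: "integrable M (\<lambda>w. norm (xi 0 w))"
begin

definition pth :: "real \<Rightarrow> 'w \<Rightarrow> real \<Rightarrow> real ^ 'd" where
  "pth h w = (\<lambda>t\<in>{0..}. xi (t + h) w)"

lemma pth_meas: "h \<ge> 0 \<Longrightarrow> pth h \<in> M \<rightarrow>\<^sub>M PS"
  unfolding pth_def PS_def by (rule measurable_restrict) (auto intro: meas)

lemma pth_stat: "h \<ge> 0 \<Longrightarrow> distr M PS (pth h) = distr M PS (pth 0)"
  using stat unfolding stationary_process_def pth_def PS_def by simp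

lemma marg: assumes h: "h \<ge> 0" shows "distr M borel (xi h) = distr M borel (xi 0)"
proof -
  have ev[measurable]: "(\<lambda>p. p 0) \<in> (PS :: (real \<Rightarrow> real ^ 'd) measure) \<rightarrow>\<^sub>M borel"
    unfolding PS_def by (rule measurable_component_singleton) simp
  have "distr M borel (xi h) = distr M borel ((\<lambda>p. p 0) \<circ> pth h)"
    by (rule arg_cong[where f = "distr M borel"]) (auto simp: pth_def o_def)
  also have "\<dots> = distr (distr M PS (pth h)) borel (\<lambda>p. p 0)"
    by (rule distr_distr[symmetric, OF ev pth_meas[OF h]])
  also have "\<dots> = distr (distr M PS (pth 0)) borel (\<lambda>p. p 0)" using pth_stat[OF h] by simp
  also have "\<dots> = distr M borel ((\<lambda>p. p 0) \<circ> pth 0)"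
    by (rule distr_distr[OF ev pth_meas]) simp
  also have "\<dots> = distr M borel (xi 0)"
    by (rule arg_cong[where f = "distr M borel"]) (auto simp: pth_def o_def)
  finally show ?thesis .
qed

lemma norm_h: assumes h: "h \<ge> 0"
  shows "integrable M (\<lambda>w. norm (xi h w))" "(\<integral>w. norm (xi h w) \<partial>M) = (\<integral>w. norm (xi 0 w) \<partial>M)"
proof -
  have m0[measurable]: "xi 0 \<in> borel_measurable M" and mh[measurable]: "xi h \<in> borel_measurable M"
    using meas h by auto
  have "integrable (distr M borel (xi 0)) norm" using int by (simp add: integrable_distr_eq)
  then have "integrable (distr M borel (xi h)) norm" using marg[OF h] by simp
  then show "integrable M (\<lambda>w. norm (xi h w))" by (simp add: integrable_distr_eq)
  have "(\<integral>w. norm (xi h w) \<partial>M) = integral\<^sup>L (distr M borel (xi h)) norm"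
    by (simp add: integral_distr)
  also have "\<dots> = integral\<^sup>L (distr M borel (xi 0)) norm" using marg[OF h] by simp
  also have "\<dots> = (\<integral>w. norm (xi 0 w) \<partial>M)" by (simp add: integral_distr)
  finally show "(\<integral>w. norm (xi h w) \<partial>M) = (\<integral>w. norm (xi 0 w) \<partial>M)" .
qed


definition Yp :: "(real ^ 'd \<Rightarrow> real) \<Rightarrow> 'w \<Rightarrow> nat \<Rightarrow> real" where
  "Yp \<phi> w = Phi \<phi> (pth 0 w)"

lemma Yp_meas: "\<phi> \<in> borel_measurable borel \<Longrightarrow> Yp \<phi> \<in> M \<rightarrow>\<^sub>M seqM"
  unfolding Yp_def using measurable_comp[OF pth_meas[of 0] Phi_meas[of \<phi>]] by (simp add: o_def)

lemma RS_pth: "a \<ge> 0 \<Longrightarrow> RS \<phi> (pth h w) a m = (\<Sum>j<m. \<phi> (xi (a + real j / real m + h) w)) / real m"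
  unfolding RS_def pth_def by simp

lemma Yp_shift: "shf (Yp \<phi> w) = Phi \<phi> (pth 1 w)"
proof (rule ext)
  fix n
  have "RS \<phi> (pth 0 w) (real (Suc n)) = RS \<phi> (pth 1 w) (real n)"
    by (rule ext) (simp add: RS_pth add_ac)
  then show "shf (Yp \<phi> w) n = Phi \<phi> (pth 1 w) n" unfolding shf_def Yp_def Phi_def by simp
qed

lemma Yp_riemann:
  assumes w: "w \<in> space M" and cphi: "continuous_on UNIV \<phi>"
  shows "RS \<phi> (pth 0 w) (real n) \<longlonglongrightarrow> integral {real n..real n + 1} (\<lambda>s. \<phi> (xi s w))"
    and "Yp \<phi> w n = integral {real n..real n + 1} (\<lambda>s. \<phi> (xi s w))"
proof -
  have c: "continuous_on {real n..real n + 1} (\<lambda>s. \<phi> (xi s w))"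
    by (rule continuous_on_compose2[OF cphi continuous_on_subset[OF cont[OF w]]]) auto
  have "(\<lambda>m. (\<Sum>j<m. \<phi> (xi (real n + real j / real m) w)) / real m) \<longlonglongrightarrow> integral {real n..real n + 1} (\<lambda>s. \<phi> (xi s w))"
    by (rule riemann[OF c])
  moreover have "RS \<phi> (pth 0 w) (real n) = (\<lambda>m. (\<Sum>j<m. \<phi> (xi (real n + real j / real m) w)) / real m)"
    by (rule ext) (simp add: RS_pth)
  ultimately show l: "RS \<phi> (pth 0 w) (real n) \<longlonglongrightarrow> integral {real n..real n + 1} (\<lambda>s. \<phi> (xi s w))" by simp
  then show "Yp \<phi> w n = integral {real n..real n + 1} (\<lambda>s. \<phi> (xi s w))"
    unfolding Yp_def Phi_def by (rule limI)
qed


lemma Yp0_integrable: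
  assumes [measurable]: "\<phi> \<in> borel_measurable borel" and cphi: "continuous_on UNIV \<phi>"
    and bd: "\<And>v. \<bar>\<phi> v\<bar> \<le> norm v"
  shows "integrable M (\<lambda>w. Yp \<phi> w 0)"
proof -
  interpret prob_space M by (rule ps)
  define E where "E = (\<integral>w. norm (xi 0 w) \<partial>M)"
  define R where "R m w = RS \<phi> (pth 0 w) 0 m" for m w
  define T where "T m w = (\<Sum>j<m. norm (xi (real j / real m) w)) / real m" for m w
  have mx[measurable]: "xi (real j / real m) \<in> borel_measurable M" for j m by (rule meas) simp
  have Ym[measurable]: "(\<lambda>w. Yp \<phi> w 0) \<in> borel_measurable M"
    using measurable_comp[OF Yp_meas[of \<phi>] seqM_coord_meas[of 0]] by (simp add: o_def)
  have Rm[measurable]: "R m \<in> borel_measurable M" for m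
    unfolding R_def by (simp add: RS_pth)
  have Tint: "integrable M (T m)" for m
    unfolding T_def using norm_h(1) by (auto intro!: Bochner_Integration.integrable_divide)
  have Tval: "(\<integral>w. T m w \<partial>M) \<le> E" for m
  proof -
    have "(\<integral>w. T m w \<partial>M) = (\<Sum>j<m. (\<integral>w. norm (xi (real j / real m) w) \<partial>M)) / real m"
      unfolding T_def using norm_h(1) by (simp add: Bochner_Integration.integral_sum)
    also have "\<dots> = real m * E / real m"
    proof -
      have "\<And>j. (\<integral>w. norm (xi (real j / real m) w) \<partial>M) = E" unfolding E_def by (rule norm_h(2)) simp
      then show ?thesis by simp
    qed
    also have "\<dots> \<le> E" using E_def by (cases "m = 0") (auto intro: integral_nonneg_AE)
    finally show ?thesis .
  qed
  have RT: "\<bar>R m w\<bar> \<le> T m w" for m w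
  proof -
    have "\<bar>\<Sum>j<m. \<phi> (xi (real j / real m) w)\<bar> \<le> (\<Sum>j<m. norm (xi (real j / real m) w))"
      by (rule order.trans[OF sum_abs sum_mono]) (rule bd)
    then show ?thesis unfolding R_def T_def by (simp add: RS_pth abs_divide divide_right_mono)
  qed
  have lim: "(\<lambda>m. R m w) \<longlonglongrightarrow> Yp \<phi> w 0" if "w \<in> space M" for w
    using Yp_riemann[OF that cphi, of 0] unfolding R_def by simp
  have "(\<integral>\<^sup>+ w. ennreal (norm (Yp \<phi> w 0)) \<partial>M) = (\<integral>\<^sup>+ w. liminf (\<lambda>m. ennreal \<bar>R m w\<bar>) \<partial>M)"
  proof (rule nn_integral_cong)
    fix w assume "w \<in> space M"
    then have "(\<lambda>m. ennreal \<bar>R m w\<bar>) \<longlonglongrightarrow> ennreal \<bar>Yp \<phi> w 0\<bar>"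
      by (intro tendsto_ennrealI tendsto_rabs lim)
    then have "liminf (\<lambda>m. ennreal \<bar>R m w\<bar>) = ennreal \<bar>Yp \<phi> w 0\<bar>"
      by (intro lim_imp_Liminf) auto
    then show "ennreal (norm (Yp \<phi> w 0)) = liminf (\<lambda>m. ennreal \<bar>R m w\<bar>)" by simp
  qed
  also have "\<dots> \<le> liminf (\<lambda>m. \<integral>\<^sup>+ w. ennreal \<bar>R m w\<bar> \<partial>M)"
    by (rule nn_integral_liminf) simp
  also have "\<dots> \<le> ennreal E"
  proof -
    have "(\<integral>\<^sup>+ w. ennreal \<bar>R m w\<bar> \<partial>M) \<le> ennreal E" for m
    proof -
      have "(\<integral>\<^sup>+ w. ennreal \<bar>R m w\<bar> \<partial>M) \<le> (\<integral>\<^sup>+ w. ennreal (T m w) \<partial>M)"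
        by (rule nn_integral_mono) (rule ennreal_leI[OF RT])
      also have "\<dots> = ennreal (\<integral>w. T m w \<partial>M)"
        by (rule nn_integral_eq_integral[OF Tint]) (auto simp: T_def intro!: sum_nonneg divide_nonneg_nonneg)
      also have "\<dots> \<le> ennreal E" using Tval by (simp add: ennreal_leI)
      finally show ?thesis .
    qed
    then have "limsup (\<lambda>m. \<integral>\<^sup>+ w. ennreal \<bar>R m w\<bar> \<partial>M) \<le> ennreal E"
      by (intro Limsup_bounded) simp
    then show ?thesis using Liminf_le_Limsup[of sequentially] by (meson order.trans trivial_limit_sequentially)
  qed
  also have "\<dots> < \<infinity>" by simp
  finally show ?thesis by (rule integrableI_bounded[OF Ym])
qed


lemma Yp_stat:
  assumes [measurable]: "\<phi> \<in> borel_measurable borel" and cphi: "continuous_on UNIV \<phi>"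
    and bd: "\<And>v. \<bar>\<phi> v\<bar> \<le> norm v"
  shows "stat_seq (distr M seqM (Yp \<phi>))"
  unfolding stat_seq_def stat_seq_axioms_def
proof (intro conjI)
  note Ym = Yp_meas[OF assms(1)]
  show "prob_space (distr M seqM (Yp \<phi>))" by (rule prob_space.prob_space_distr[OF ps Ym])
  show "sets (distr M seqM (Yp \<phi>)) = sets seqM" by simp
  show "integrable (distr M seqM (Yp \<phi>)) (\<lambda>y. y 0)"
    using integrable_distr_eq[OF Ym seqM_coord_meas[of 0]] Yp0_integrable[OF assms] by simp
  have "distr (distr M seqM (Yp \<phi>)) seqM shf = distr M seqM (shf \<circ> Yp \<phi>)"
    by (rule distr_distr[OF shf_meas Ym])
  also have "shf \<circ> Yp \<phi> = Phi \<phi> \<circ> pth 1" by (rule ext) (simp add: Yp_shift)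
  also have "distr M seqM (Phi \<phi> \<circ> pth 1) = distr (distr M PS (pth 1)) seqM (Phi \<phi>)"
    by (rule distr_distr[symmetric, OF Phi_meas[OF assms(1)] pth_meas]) simp
  also have "\<dots> = distr (distr M PS (pth 0)) seqM (Phi \<phi>)" using pth_stat[of 1] by simp
  also have "\<dots> = distr M seqM (Phi \<phi> \<circ> pth 0)"
    by (rule distr_distr[OF Phi_meas[OF assms(1)] pth_meas]) simp
  also have "Phi \<phi> \<circ> pth 0 = Yp \<phi>" by (rule ext) (simp add: Yp_def)
  finally show "distr (distr M seqM (Yp \<phi>)) seqM shf = distr M seqM (Yp \<phi>)" .
qed

lemma Yp_AE:
  assumes [measurable]: "\<phi> \<in> borel_measurable borel" and cphi: "continuous_on UNIV \<phi>"
    and bd: "\<And>v. \<bar>\<phi> v\<bar> \<le> norm v"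
  shows "AE w in M. convergent (\<lambda>N. (\<Sum>k<N. integral {real k..real k + 1} (\<lambda>s. \<phi> (xi s w))) / real N)"
proof -
  interpret S: stat_seq "distr M seqM (Yp \<phi>)" by (rule Yp_stat[OF assms])
  have "AE w in M. convergent (\<lambda>n. (\<Sum>k<n. Yp \<phi> w k) / real n)"
    by (rule AE_distrD[OF Yp_meas[OF assms(1)] S.birkhoff])
  then show ?thesis
  proof (rule AE_mp[OF _ AE_I2], intro impI)
    fix w assume "w \<in> space M" "convergent (\<lambda>n. (\<Sum>k<n. Yp \<phi> w k) / real n)"
    then show "convergent (\<lambda>N. (\<Sum>k<N. integral {real k..real k + 1} (\<lambda>s. \<phi> (xi s w))) / real N)"
      using Yp_riemann(2)[OF _ cphi] by simp
  qed
qed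


lemma main:
  "AE w in M. \<exists>Q :: real ^ 'd.
     ((\<lambda>t. integral {0..t} (\<lambda>s. xi s w) /\<^sub>R t) \<longlongrightarrow> Q) at_top \<and>
     (\<forall>is :: 'd list. is \<noteq> [] \<longrightarrow>
        ((\<lambda>t. Sigma (\<lambda>s. xi s w) is t / t ^ length is) \<longlongrightarrow>
           (1 / fact (length is)) * (\<Prod>i\<leftarrow>is. Q $ i)) at_top)"
proof -
  have m1[measurable]: "(\<lambda>v::real ^ 'd. v $ i) \<in> borel_measurable borel" for i by measurable
  have m2[measurable]: "(\<lambda>v::real ^ 'd. \<bar>v $ i\<bar>) \<in> borel_measurable borel" for i by measurable
  have c1: "continuous_on UNIV (\<lambda>v::real ^ 'd. v $ i)" for i by (intro continuous_intros)
  have c2: "continuous_on UNIV (\<lambda>v::real ^ 'd. \<bar>v $ i\<bar>)" for i by (intro continuous_intros)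
  have b1: "\<bar>v $ i\<bar> \<le> norm v" for v :: "real ^ 'd" and i by (rule component_le_norm_cart)
  have b2: "\<bar>\<bar>v $ i\<bar>\<bar> \<le> norm v" for v :: "real ^ 'd" and i using b1 by simp
  have "AE w in M. \<forall>i\<in>UNIV.
      convergent (\<lambda>N. (\<Sum>k<N. integral {real k..real k + 1} (\<lambda>s. xi s w $ i)) / real N) \<and>
      convergent (\<lambda>N. (\<Sum>k<N. integral {real k..real k + 1} (\<lambda>s. \<bar>xi s w $ i\<bar>)) / real N)"
  proof (rule AE_finite_allI)
    fix i :: 'd
    show "AE w in M. convergent (\<lambda>N. (\<Sum>k<N. integral {real k..real k + 1} (\<lambda>s. xi s w $ i)) / real N) \<and>
      convergent (\<lambda>N. (\<Sum>k<N. integral {real k..real k + 1} (\<lambda>s. \<bar>xi s w $ i\<bar>)) / real N)"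
      using Yp_AE[OF m1 c1 b1, of i] Yp_AE[OF m2 c2 b2, of i] by eventually_elim simp
  qed simp
  then show ?thesis
  proof (rule AE_mp[OF _ AE_I2], intro impI)
    fix w assume w: "w \<in> space M" and conv: "\<forall>i\<in>UNIV.
      convergent (\<lambda>N. (\<Sum>k<N. integral {real k..real k + 1} (\<lambda>s. xi s w $ i)) / real N) \<and>
      convergent (\<lambda>N. (\<Sum>k<N. integral {real k..real k + 1} (\<lambda>s. \<bar>xi s w $ i\<bar>)) / real N)"
    define x where "x = (\<lambda>s. xi s w)"
    have cx: "continuous_on {0..} x" unfolding x_def by (rule cont[OF w])
    define Q :: "real ^ 'd" where
      "Q = (\<chi> i. lim (\<lambda>N. (\<Sum>k<N. integral {real k..real k + 1} (\<lambda>s. x s $ i)) / real N))"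
    have dc: "((\<lambda>t. integral {0..t} (\<lambda>s. x s $ i) / t) \<longlongrightarrow> Q $ i) at_top \<and>
        (\<exists>C. eventually (\<lambda>t. integral {0..t} (\<lambda>s. \<bar>x s $ i\<bar>) \<le> C * t) at_top)" for i
    proof -
      have k1: "convergent (\<lambda>N. (\<Sum>k<N. integral {real k..real k + 1} (\<lambda>s. x s $ i)) / real N)"
        and k2: "convergent (\<lambda>N. (\<Sum>k<N. integral {real k..real k + 1} (\<lambda>s. \<bar>x s $ i\<bar>)) / real N)"
        using conv unfolding x_def by auto
      note Y = k1[unfolded convergent_LIMSEQ_iff]
      obtain r where Z: "(\<lambda>N. (\<Sum>k<N. integral {real k..real k + 1} (\<lambda>s. \<bar>x s $ i\<bar>)) / real N) \<longlonglongrightarrow> r"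
        using k2 unfolding convergent_def by blast
      show ?thesis using disc_to_cont[OF comp_cont[OF cx] Y Z] unfolding Q_def by simp
    qed
    have avg: "((\<lambda>t. integral {0..t} (\<lambda>s. x s $ i) / t) \<longlongrightarrow> Q $ i) at_top" for i using dc by blast
    have bnd: "\<exists>C. eventually (\<lambda>t. integral {0..t} (\<lambda>s. \<bar>x s $ i\<bar>) \<le> C * t) at_top" for i using dc by blast
    have it: "((\<lambda>t. iter_int_rev x rs t / t ^ length rs) \<longlongrightarrow> (\<Prod>i\<leftarrow>rs. Q $ i) / fact (length rs)) at_top" for rs
      using iter_lemma[OF cx avg bnd] by blast
    have vec: "((\<lambda>t. integral {0..t} x /\<^sub>R t) \<longlongrightarrow> Q) at_top"
    proof -
      have eq: "integral {0..t} x /\<^sub>R t = (\<chi> i. integral {0..t} (\<lambda>s. x s $ i) / t)" for t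
      proof -
        have "x integrable_on {0..t}"
          by (rule integrable_continuous_interval, rule continuous_on_subset[OF cx]) auto
        then show ?thesis by (simp add: vec_eq_iff integral_component_eq_cart divide_inverse mult.commute)
      qed
      have "((\<lambda>t. \<chi> i. integral {0..t} (\<lambda>s. x s $ i) / t) \<longlongrightarrow> (\<chi> i. Q $ i)) at_top"
        by (rule tendsto_vec_lambda) (rule avg)
      then show ?thesis unfolding eq by simp
    qed
    have sig: "((\<lambda>t. Sigma x is t / t ^ length is) \<longlongrightarrow> (1 / fact (length is)) * (\<Prod>i\<leftarrow>is. Q $ i)) at_top"
      for "is" :: "'d list"
    proof -
      have "((\<lambda>t. iter_int_rev x (rev is) t / t ^ length (rev is)) \<longlongrightarrow> (\<Prod>i\<leftarrow>rev is. Q $ i) / fact (length (rev is))) at_top"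
        by (rule it)
      moreover have "(\<Prod>i\<leftarrow>rev is. Q $ i) = (\<Prod>i\<leftarrow>is. Q $ i)"
        by (simp add: rev_map[symmetric] prod_list.rev)
      ultimately show ?thesis by (simp add: Sigma_def)
    qed
    show "\<exists>Q :: real ^ 'd.
       ((\<lambda>t. integral {0..t} (\<lambda>s. xi s w) /\<^sub>R t) \<longlongrightarrow> Q) at_top \<and>
       (\<forall>is :: 'd list. is \<noteq> [] \<longrightarrow>
          ((\<lambda>t. Sigma (\<lambda>s. xi s w) is t / t ^ length is) \<longlongrightarrow>
             (1 / fact (length is)) * (\<Prod>i\<leftarrow>is. Q $ i)) at_top)"
      using vec sig unfolding x_def by blast
  qed
qed

end

theorem corollary2p5:
  fixes M :: "'w measure" and xi :: "real \<Rightarrow> 'w \<Rightarrow> real ^ 'd"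
  assumes "prob_space M"
    and "\<And>t. t \<ge> 0 \<Longrightarrow> xi t \<in> borel_measurable M"
    and "\<And>w. w \<in> space M \<Longrightarrow> continuous_on {0..} (\<lambda>t. xi t w)"
    and "stationary_process M xi"
    and "integrable M (\<lambda>w. norm (xi 0 w))"
  shows "AE w in M. \<exists>Q :: real ^ 'd.
           ((\<lambda>t. integral {0..t} (\<lambda>s. xi s w) /\<^sub>R t) \<longlongrightarrow> Q) at_top \<and>
           (\<forall>is :: 'd list. is \<noteq> [] \<longrightarrow>
              ((\<lambda>t. Sigma (\<lambda>s. xi s w) is t / t ^ length is) \<longlongrightarrow>
                 (1 / fact (length is)) * (\<Prod>i\<leftarrow>is. Q $ i)) at_top)"
proof -
  interpret setting M xi by (rule setting.intro) (use assms in auto)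
  show ?thesis by (rule main)
qed


end
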